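(* For every $x\ge0$, $\lim_{\lambda\to\infty}V(x,\lambda)=x$.
   Context: Fix constants $p>0$ (premium rate), $q>0$ (discount rate), $d>0$, $\beta>0$, $\underline{\lambda}\ge0$, and distribution functions $F_U,F_Y$ of strictly positive random variables with finite expectation. For an initial intensity $\lambda\ge\underline{\lambda}$ the claim intensity is the shot-noise process $\lambda_t=\underline{\lambda}+e^{-dt}(\lambda-\underline{\lambda})+\sum_{k=1}^{\widetilde N_t}Y_k e^{-d(t-T_k)}$, where $\widetilde N_t=\#\{k:T_k\le t\}$ is a Poisson process of rate $\beta$ with arrival times $T_k$ and the $Y_k$ are i.i.d. with distribution $F_Y$, independent of $\widetilde N$. Conditionally on $(\lambda_s)_{s\ge0}$, the claim counting process $N_t=\#\{j:\tau_j\le t\}$ is an inhomogeneous Poisson process with intensity $\lambda_t$ (a Cox process), and the claim sizes $U_j$ are i.i.d. with distribution $F_U$, independent of all the rest. For initial surplus $x\ge0$ the surplus is $X_t=x+pt-\sum_{j=1}^{N_t}U_j$, and $(\mathcal F_t)$ is the completed filtration generated by the intensity jumps $(T_k,Y_k)$ and the claims $(\tau_j,U_j)$ up to time $t$. The premium satisfies $p=(1+\eta)\mathbb E(U_1)\lambda_{\mathrm{av}}$ with $\eta>0$ and $\lambda_{\mathrm{av}}=\lim_{t\to\infty}\mathbb E(\int_0^t\lambda_sds)/t$. A dividend strategy $L=(L_t)_{t\ge0}$ is admissible, $L\in\Pi_{x,\lambda}$, if it is non-decreasing, càdlàg, $(\mathcal F_t)$-adapted, $L_0\ge0$ and $L_t\le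 X_t$ for $t<\tau^L$, where $\tau^L=\inf\{t\ge0:X_t-L_{t^-}<0\}$ is the ruin time. Its value is $J(L;x,\lambda)=\mathbb E\big(\int_{0^-}^{\tau^L}e^{-qt}dL_t\big)$ and the optimal value function is $V(x,\lambda)=\sup_{L\in\Pi_{x,\lambda}}J(L;x,\lambda)$ for $x\ge0$, $\lambda\ge\underline{\lambda}$. *)

theory Defs
  imports "HOL-Probability.Probability"
begin

(* Arrival times of the intensity jumps: T_k = E_0 + ... + E_k (k = 0,1,2,...),
   with E_i i.i.d. Exp(beta) inter-arrival times. *)
definition arr :: "(nat \<Rightarrow> 'a \<Rightarrow> real) \<Rightarrow> nat \<Rightarrow> 'a \<Rightarrow> real" where
  "arr E k \<omega> = (\<Sum>i\<le>k. E i \<omega>)"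

definition intensity :: "real \<Rightarrow> real \<Rightarrow> (nat \<Rightarrow> 'a \<Rightarrow> real) \<Rightarrow> (nat \<Rightarrow> 'a \<Rightarrow> real)
    \<Rightarrow> real \<Rightarrow> real \<Rightarrow> 'a \<Rightarrow> real" where
  "intensity llow d E Y l0 t \<omega> =
     llow + exp (- d * t) * (l0 - llow)
     + (\<Sum>k\<in>{k. arr E k \<omega> \<le> t}. Y k \<omega> * exp (- d * (t - arr E k \<omega>)))"

definition Lam :: "real \<Rightarrow> real \<Rightarrow> (nat \<Rightarrow> 'a \<Rightarrow> real) \<Rightarrow> (nat \<Rightarrow> 'a \<Rightarrow> real)
    \<Rightarrow> real \<Rightarrow> real \<Rightarrow> 'a \<Rightarrow> real" where
  "Lam llow d E Y l0 t \<omega> = integral {0..t} (\<lambda>s. intensity llow d E Y l0 s \<omega>)"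

(* Claim arrival times of the Cox process, realised as the time change of a unit-rate
   Poisson process with arrival times S_j = G_0 + ... + G_j (G_i i.i.d. Exp(1),
   independent of the intensity): tau_j = inf{t >= 0. Lambda(t) >= S_j}. *)
definition claimtime :: "real \<Rightarrow> real \<Rightarrow> (nat \<Rightarrow> 'a \<Rightarrow> real) \<Rightarrow> (nat \<Rightarrow> 'a \<Rightarrow> real)
    \<Rightarrow> (nat \<Rightarrow> 'a \<Rightarrow> real) \<Rightarrow> real \<Rightarrow> nat \<Rightarrow> 'a \<Rightarrow> real" where
  "claimtime llow d E Y G l0 j \<omega> = Inf {t. 0 \<le> t \<and> arr G j \<omega> \<le> Lam llow d E Y l0 t \<omega>}"

definition surplus :: "real \<Rightarrow> real \<Rightarrow> (nat \<Rightarrow> 'a \<Rightarrow> real) \<Rightarrow> (nat \<Rightarrow> 'a \<Rightarrow> real)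
    \<Rightarrow> (nat \<Rightarrow> 'a \<Rightarrow> real) \<Rightarrow> (nat \<Rightarrow> 'a \<Rightarrow> real) \<Rightarrow> real \<Rightarrow> real \<Rightarrow> real
    \<Rightarrow> real \<Rightarrow> 'a \<Rightarrow> real" where
  "surplus llow d E Y G U p x l0 t \<omega> =
     x + p * t - (\<Sum>j\<in>{j. claimtime llow d E Y G l0 j \<omega> \<le> t}. U j \<omega>)"

definition nat_filt :: "'a measure \<Rightarrow> real \<Rightarrow> real \<Rightarrow> (nat \<Rightarrow> 'a \<Rightarrow> real) \<Rightarrow> (nat \<Rightarrow> 'a \<Rightarrow> real)
    \<Rightarrow> (nat \<Rightarrow> 'a \<Rightarrow> real) \<Rightarrow> (nat \<Rightarrow> 'a \<Rightarrow> real) \<Rightarrow> real \<Rightarrow> real \<Rightarrow> 'a set set" where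
  "nat_filt M llow d E Y G U l0 t = sigma_sets (space M)
     ({{\<omega>\<in>space M. arr E k \<omega> \<le> s \<and> Y k \<omega> \<le> y} | k s y. s \<le> t}
      \<union> {{\<omega>\<in>space M. claimtime llow d E Y G l0 j \<omega> \<le> s \<and> U j \<omega> \<le> y} | j s y. s \<le> t})"

definition completed :: "'a measure \<Rightarrow> 'a set set \<Rightarrow> 'a set set" where
  "completed M F = {A. A \<subseteq> space M \<and>
      (\<exists>B\<in>F. \<exists>N\<in>null_sets M. (A - B) \<union> (B - A) \<subseteq> N)}"

(* left limit L_{t-}, with L_{0-} = 0 *)
definition Lminus :: "(real \<Rightarrow> 'a \<Rightarrow> real) \<Rightarrow> real \<Rightarrow> 'a \<Rightarrow> real" where
  "Lminus L t \<omega> = (if t \<le> 0 then 0 else (SUP s\<in>{0..<t}. L s \<omega>))"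

definition ruin_time :: "(real \<Rightarrow> 'a \<Rightarrow> real) \<Rightarrow> (real \<Rightarrow> 'a \<Rightarrow> real) \<Rightarrow> 'a \<Rightarrow> ereal" where
  "ruin_time X L \<omega> = Inf {ereal t | t. 0 \<le> t \<and> X t \<omega> - Lminus L t \<omega> < 0}"

definition admissible :: "'a measure \<Rightarrow> (real \<Rightarrow> 'a set set) \<Rightarrow> (real \<Rightarrow> 'a \<Rightarrow> real)
    \<Rightarrow> (real \<Rightarrow> 'a \<Rightarrow> real) \<Rightarrow> bool" where
  "admissible M Fc X L \<longleftrightarrow>
     (\<forall>\<omega>\<in>space M.
        (\<forall>s t. 0 \<le> s \<longrightarrow> s \<le> t \<longrightarrow> L s \<omega> \<le> L t \<omega>)
      \<and> (\<forall>t\<ge>0. continuous (at_right t) (\<lambda>s. L s \<omega>))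
      \<and> 0 \<le> L 0 \<omega>
      \<and> (\<forall>t\<ge>0. ereal t < ruin_time X L \<omega> \<longrightarrow> L t \<omega> \<le> X t \<omega>))
   \<and> (\<forall>t\<ge>0. \<forall>B\<in>sets borel. {\<omega>\<in>space M. L t \<omega> \<in> B} \<in> Fc t)"

(* pathwise discounted dividends int_{0-}^{tau} e^{-qt} dL_t (Lebesgue-Stieltjes integral
   w.r.t. L extended by 0 on negative times, so the initial lump L_0 is included) *)
definition disc_div :: "real \<Rightarrow> (real \<Rightarrow> 'a \<Rightarrow> real) \<Rightarrow> ereal \<Rightarrow> 'a \<Rightarrow> ennreal" where
  "disc_div q L \<tau> \<omega> =
     (\<integral>\<^sup>+ s. indicator {s. 0 \<le> s \<and> ereal s < \<tau>} s * ennreal (exp (- q * s))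
        \<partial>interval_measure (\<lambda>s. if s < 0 then 0 else L s \<omega>))"

definition Jval :: "'a measure \<Rightarrow> real \<Rightarrow> (real \<Rightarrow> 'a \<Rightarrow> real) \<Rightarrow> (real \<Rightarrow> 'a \<Rightarrow> real) \<Rightarrow> ennreal" where
  "Jval M q X L = (\<integral>\<^sup>+ \<omega>. disc_div q L (ruin_time X L \<omega>) \<omega> \<partial>M)"

definition Vfun :: "'a measure \<Rightarrow> real \<Rightarrow> real \<Rightarrow> real \<Rightarrow> (nat \<Rightarrow> 'a \<Rightarrow> real) \<Rightarrow> (nat \<Rightarrow> 'a \<Rightarrow> real)
    \<Rightarrow> (nat \<Rightarrow> 'a \<Rightarrow> real) \<Rightarrow> (nat \<Rightarrow> 'a \<Rightarrow> real) \<Rightarrow> real \<Rightarrow> real \<Rightarrow> real \<Rightarrow> ennreal" where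
  "Vfun M q llow d E Y G U p x l0 =
     (SUP L\<in>{L. admissible M
                 (\<lambda>t. completed M (nat_filt M llow d E Y G U l0 t))
                 (surplus llow d E Y G U p x l0) L}.
        Jval M q (surplus llow d E Y G U p x l0) L)"

definition prim_family :: "(nat \<Rightarrow> 'a \<Rightarrow> real) \<Rightarrow> (nat \<Rightarrow> 'a \<Rightarrow> real) \<Rightarrow> (nat \<Rightarrow> 'a \<Rightarrow> real)
    \<Rightarrow> (nat \<Rightarrow> 'a \<Rightarrow> real) \<Rightarrow> nat \<times> nat \<Rightarrow> 'a \<Rightarrow> real" where
  "prim_family E Y G U = (\<lambda>(i, k). if i = 0 then E k else if i = 1 then Y k
                                    else if i = 2 then G k else U k)"

end

theory Submission
  imports Defs
begin

lemma arr_mono: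
  assumes "\<forall>k. E k \<omega> \<ge> 0" "k \<le> k'"
  shows "arr E k \<omega> \<le> arr E k' \<omega>"
  unfolding arr_def using assms by (intro sum_mono2) auto

lemma arr_nonneg:
  assumes "\<forall>k. E k \<omega> \<ge> 0"
  shows "arr E k \<omega> \<ge> 0"
  unfolding arr_def using assms by (intro sum_nonneg) auto

locale pth =
  fixes llow d l0 :: real and E Y :: "nat \<Rightarrow> 'a \<Rightarrow> real" and \<omega> :: 'a
  assumes d: "d > 0" and llow: "llow \<ge> 0" and l0: "l0 \<ge> llow"
    and Epos: "\<forall>k. E k \<omega> \<ge> 0" and Ypos: "\<forall>k. Y k \<omega> \<ge> 0"
    and Ediv: "\<forall>K. \<exists>n. arr E n \<omega> > K" and Ydiv: "\<forall>K. \<exists>n. (\<Sum>k\<le>n. Y k \<omega>) > K"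
begin

abbreviation "lam s \<equiv> intensity llow d E Y l0 s \<omega>"
abbreviation "LL t \<equiv> Lam llow d E Y l0 t \<omega>"

lemma fin_arr: "\<exists>n. \<forall>s\<le>T. {k. arr E k \<omega> \<le> s} \<subseteq> {..n}"
proof -
  obtain n where n: "arr E n \<omega> > T" using Ediv by blast
  have "k \<le> n" if "arr E k \<omega> \<le> s" "s \<le> T" for k s
  proof (rule ccontr)
    assume "\<not> k \<le> n"
    then have "arr E n \<omega> \<le> arr E k \<omega>" using arr_mono[of E \<omega> n k] Epos by simp
    then show False using that n by simp
  qed
  then show ?thesis by blast
qed

definition "shot k s = (if s \<in> {arr E k \<omega>..} then Y k \<omega> * exp (- d * (s - arr E k \<omega>)) else 0)"

lemma shot_nonneg: "shot k s \<ge> 0"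
  unfolding shot_def using Ypos by auto

lemma intensity_eq:
  assumes "{k. arr E k \<omega> \<le> s} \<subseteq> {..n}"
  shows "lam s = llow + exp (- d * s) * (l0 - llow) + (\<Sum>k\<le>n. shot k s)"
proof -
  have "{k. arr E k \<omega> \<le> s} = {k\<in>{..n}. arr E k \<omega> \<le> s}" using assms by auto
  then have "(\<Sum>k\<in>{k. arr E k \<omega> \<le> s}. Y k \<omega> * exp (- d * (s - arr E k \<omega>)))
      = (\<Sum>k\<le>n. shot k s)"
    unfolding shot_def by (simp add: sum.inter_filter[symmetric])
  then show ?thesis unfolding intensity_def by simp
qed

lemma shot_integrable: "shot k integrable_on {0..T}"
proof -
  have "(\<lambda>s. Y k \<omega> * exp (- d * (s - arr E k \<omega>))) integrable_on ({arr E k \<omega>..} \<inter> {0..T})"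
  proof -
    have eq: "{arr E k \<omega>..} \<inter> {0..T} = {max 0 (arr E k \<omega>)..T}" by auto
    have "continuous_on {max 0 (arr E k \<omega>)..T} (\<lambda>s. Y k \<omega> * exp (- d * (s - arr E k \<omega>)))"
      by (intro continuous_intros)
    then have "(\<lambda>s. Y k \<omega> * exp (- d * (s - arr E k \<omega>))) integrable_on {max 0 (arr E k \<omega>)..T}"
      by (rule integrable_continuous_interval)
    then show ?thesis by (simp only: eq)
  qed
  then show ?thesis unfolding shot_def[abs_def]
    by (simp only: integrable_restrict_Int)
qed

lemma lam_integrable: "lam integrable_on {0..T}"
proof -
  obtain n where n: "\<forall>s\<le>T. {k. arr E k \<omega> \<le> s} \<subseteq> {..n}" using fin_arr by blast
  have "(\<lambda>s. llow + exp (- d * s) * (l0 - llow) + (\<Sum>k\<le>n. shot k s)) integrable_on {0..T}"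
    by (intro integrable_add integrable_sum shot_integrable integrable_continuous_interval
        continuous_intros) auto
  then show ?thesis
    by (rule integrable_eq) (use n intensity_eq in auto)
qed

lemma lam_lower: "s \<ge> 0 \<Longrightarrow> lam s \<ge> llow + exp (- d * s) * (l0 - llow)"
  unfolding intensity_def using Ypos by (auto intro!: sum_nonneg)

lemma lam_nonneg: "s \<ge> 0 \<Longrightarrow> lam s \<ge> 0"
  using lam_lower[of s] llow l0 by (smt (verit) exp_gt_zero mult_nonneg_nonneg)

lemma lam_upper: "\<exists>B\<ge>0. \<forall>s\<in>{0..T}. lam s \<le> B"
proof -
  obtain n where n: "\<forall>s\<le>T. {k. arr E k \<omega> \<le> s} \<subseteq> {..n}" using fin_arr by blast
  define B where "B = llow + (l0 - llow) + (\<Sum>k\<le>n. Y k \<omega>)"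
  have "lam s \<le> B" if "s \<in> {0..T}" for s
  proof -
    have e1: "exp (- d * s) * (l0 - llow) \<le> l0 - llow"
      using that d l0 by (intro mult_left_le_one_le) auto
    have "shot k s \<le> Y k \<omega>" for k
    proof -
      have "Y k \<omega> * exp (- d * (s - arr E k \<omega>)) \<le> Y k \<omega>" if "s \<in> {arr E k \<omega>..}"
      proof (rule mult_left_le)
        show "exp (- d * (s - arr E k \<omega>)) \<le> 1" using d that by simp
      qed (use Ypos in auto)
      then show ?thesis unfolding shot_def using Ypos[rule_format, of k] by auto
    qed
    then have "(\<Sum>k\<le>n. shot k s) \<le> (\<Sum>k\<le>n. Y k \<omega>)" by (intro sum_mono) auto
    then show ?thesis using intensity_eq[of s n] n that e1 unfolding B_def by auto
  qed
  moreover have "B \<ge> 0"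
  proof -
    have "(\<Sum>k\<le>n. Y k \<omega>) \<ge> 0" using Ypos by (intro sum_nonneg) auto
    then show ?thesis unfolding B_def using llow l0 by linarith
  qed
  ultimately show ?thesis by blast
qed

lemma LL_bounds:
  shows "\<exists>B\<ge>0. \<forall>t\<in>{0..T}. LL t \<le> t * B"
proof -
  obtain B where B: "B \<ge> 0" "\<forall>s\<in>{0..T}. lam s \<le> B" using lam_upper by blast
  have "LL t \<le> t * B" if "t \<in> {0..T}" for t
  proof -
    have "LL t \<le> integral {0..t} (\<lambda>_. B)" unfolding Lam_def
    proof (rule integral_le[OF lam_integrable integrable_continuous_interval[OF continuous_on_const]])
      fix s assume "s \<in> {0..t}"
      then have "s \<in> {0..T}" using that by auto
      then show "lam s \<le> B" using B(2) by blast
    qed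
    then show ?thesis using that by simp
  qed
  then show ?thesis using B by blast
qed

lemma LL_lower:
  assumes "0 \<le> t"
  shows "LL t \<ge> t * (exp (- d * t) * (l0 - llow))"
proof -
  have "integral {0..t} (\<lambda>_. exp (- d * t) * (l0 - llow)) \<le> LL t" unfolding Lam_def
  proof (rule integral_le[OF integrable_continuous_interval[OF continuous_on_const] lam_integrable])
    fix s assume s: "s \<in> {0..t}"
    have "d * s \<le> d * t" using s d by (intro mult_left_mono) auto
    then have "exp (- d * t) \<le> exp (- d * s)" by simp
    then have "exp (- d * t) * (l0 - llow) \<le> exp (- d * s) * (l0 - llow)"
      using l0 by (intro mult_right_mono) auto
    moreover have "s \<ge> 0" using s by auto
    ultimately show "exp (- d * t) * (l0 - llow) \<le> lam s" using lam_lower[of s] llow by linarith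
  qed
  moreover have "integral {0..t} (\<lambda>_. exp (- d * t) * (l0 - llow)) = t * (exp (- d * t) * (l0 - llow))"
    using assms by (simp only: integral_const_real content_real) simp
  ultimately show ?thesis by linarith
qed

end

context pth begin

lemma LL_unbounded: "\<exists>t\<ge>0. LL t \<ge> K"
proof -
  obtain n where n: "(\<Sum>k\<le>n. Y k \<omega>) > K * exp d" using Ydiv by blast
  define T where "T = arr E n \<omega> + 1"
  define bump where "bump k s = (if s \<in> {arr E k \<omega>..arr E k \<omega> + 1} then Y k \<omega> * exp (-d) else 0)" for k s
  have pw: "(\<Sum>k\<le>n. bump k s) \<le> lam s" if "s \<in> {0..T}" for s
  proof -
    obtain N where N: "\<forall>s'\<le>T. {k. arr E k \<omega> \<le> s'} \<subseteq> {..N}" using fin_arr by blast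
    have fin: "finite {k. arr E k \<omega> \<le> s}" using N that
      by (meson atLeastAtMost_iff finite_atMost finite_subset)
    have "(\<Sum>k\<le>n. bump k s) = (\<Sum>k\<in>{k\<in>{..n}. s \<in> {arr E k \<omega>..arr E k \<omega> + 1}}. Y k \<omega> * exp(-d))"
      unfolding bump_def by (rule sum.inter_filter[symmetric]) simp
    also have "\<dots> \<le> (\<Sum>k\<in>{k\<in>{..n}. s \<in> {arr E k \<omega>..arr E k \<omega> + 1}}. Y k \<omega> * exp (- d * (s - arr E k \<omega>)))"
    proof (rule sum_mono)
      fix k assume "k \<in> {k\<in>{..n}. s \<in> {arr E k \<omega>..arr E k \<omega> + 1}}"
      then have "d * (s - arr E k \<omega>) \<le> d * 1" using d by (intro mult_left_mono) auto
      then have "exp (-d) \<le> exp (- d * (s - arr E k \<omega>))" by simp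
      then show "Y k \<omega> * exp (-d) \<le> Y k \<omega> * exp (- d * (s - arr E k \<omega>))"
        using Ypos by (intro mult_left_mono) auto
    qed
    also have "\<dots> \<le> (\<Sum>k\<in>{k. arr E k \<omega> \<le> s}. Y k \<omega> * exp (- d * (s - arr E k \<omega>)))"
      by (rule sum_mono2[OF fin]) (use Ypos in auto)
    also have "\<dots> \<le> lam s"
    proof -
      have "0 \<le> exp (- d * s) * (l0 - llow)" using l0 by simp
      then show ?thesis unfolding intensity_def using llow by linarith
    qed
    finally show ?thesis .
  qed
  have bint: "bump k integrable_on {0..T}" for k
  proof -
    have "(\<lambda>_. Y k \<omega> * exp (-d)) integrable_on ({arr E k \<omega>..arr E k \<omega> + 1} \<inter> {0..T})"
    proof -
      have "{arr E k \<omega>..arr E k \<omega> + 1} \<inter> {0..T} = {max 0 (arr E k \<omega>)..min T (arr E k \<omega> + 1)}" by auto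
      then show ?thesis by (simp only:) (rule integrable_continuous_interval[OF continuous_on_const])
    qed
    then show ?thesis unfolding bump_def[abs_def] by (subst integrable_restrict_Int)
  qed
  have bval: "integral {0..T} (bump k) = Y k \<omega> * exp (-d)" if "k \<le> n" for k
  proof -
    have a0: "arr E k \<omega> \<ge> 0" using arr_nonneg[of E \<omega> k] Epos by simp
    have "arr E k \<omega> \<le> arr E n \<omega>" using arr_mono[of E \<omega> k n] Epos that by simp
    then have "{arr E k \<omega>..arr E k \<omega> + 1} \<inter> {0..T} = {arr E k \<omega>..arr E k \<omega> + 1}"
      using a0 unfolding T_def by auto
    then have "integral {0..T} (bump k) = integral {arr E k \<omega>..arr E k \<omega> + 1} (\<lambda>_. Y k \<omega> * exp (-d))"
      unfolding bump_def[abs_def] by (simp only: integral_restrict_Int)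
    also have "\<dots> = Y k \<omega> * exp (-d)" by simp
    finally show ?thesis .
  qed
  have "integral {0..T} (\<lambda>s. \<Sum>k\<le>n. bump k s) \<le> LL T" unfolding Lam_def
    by (rule integral_le[OF integrable_sum[OF _ bint] lam_integrable pw]) auto
  moreover have "integral {0..T} (\<lambda>s. \<Sum>k\<le>n. bump k s) = (\<Sum>k\<le>n. Y k \<omega> * exp (-d))"
    using bval by (subst Henstock_Kurzweil_Integration.integral_sum[OF _ bint]) auto
  moreover have "(\<Sum>k\<le>n. Y k \<omega> * exp (-d)) = (\<Sum>k\<le>n. Y k \<omega>) * exp (-d)"
    by (simp add: sum_distrib_right)
  moreover have "K \<le> (\<Sum>k\<le>n. Y k \<omega>) * exp (-d)"
  proof -
    have "K * exp d * exp (-d) \<le> (\<Sum>k\<le>n. Y k \<omega>) * exp (-d)"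
      using n by (intro mult_right_mono) auto
    then show ?thesis by (simp add: exp_minus field_simps)
  qed
  moreover have "T \<ge> 0" unfolding T_def using arr_nonneg[of E \<omega> n] Epos by simp
  ultimately show ?thesis by (metis order_trans)
qed

end

locale pthG = pth +
  fixes G :: "nat \<Rightarrow> 'a \<Rightarrow> real"
  assumes Gpos: "\<forall>k. G k \<omega> > 0" and Gdiv: "\<forall>K. \<exists>n. arr G n \<omega> > K"
begin

abbreviation "cset j \<equiv> {t. 0 \<le> t \<and> arr G j \<omega> \<le> LL t}"
abbreviation "ct j \<equiv> claimtime llow d E Y G l0 j \<omega>"

lemma ct_def': "ct j = Inf (cset j)" unfolding claimtime_def by simp

lemma cset_ne: "cset j \<noteq> {}"
  using LL_unbounded[of "arr G j \<omega>"] by auto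

lemma cset_bdd: "bdd_below (cset j)"
  by (rule bdd_belowI[of _ 0]) auto

lemma Gnn: "\<forall>k. G k \<omega> \<ge> 0" using Gpos less_imp_le by blast

lemma ct_pos: "\<exists>\<eta>>0. \<forall>j. ct j \<ge> \<eta>"
proof -
  obtain B where B: "B \<ge> 0" "\<forall>t\<in>{0..1}. LL t \<le> t * B" using LL_bounds by blast
  define \<eta> where "\<eta> = min 1 (G 0 \<omega> / (B + 1))"
  have \<eta>: "\<eta> > 0" unfolding \<eta>_def using Gpos B by auto
  have "ct j \<ge> \<eta>" for j
  proof -
    have "t \<ge> \<eta>" if t: "t \<in> cset j" for t
    proof (cases "t \<ge> 1")
      case True then show ?thesis unfolding \<eta>_def by auto
    next
      case False
      have "G 0 \<omega> = arr G 0 \<omega>" unfolding arr_def by simp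
      also have "\<dots> \<le> arr G j \<omega>" using arr_mono[of G \<omega> 0 j] Gnn by simp
      also have "\<dots> \<le> LL t" using t by simp
      also have "\<dots> \<le> t * B" using B(2) t False by auto
      also have "\<dots> \<le> t * (B + 1)" using t by (intro mult_left_mono) auto
      finally have "G 0 \<omega> / (B + 1) \<le> t" using B by (simp add: field_simps)
      then show ?thesis unfolding \<eta>_def by auto
    qed
    then show ?thesis unfolding ct_def' by (intro cInf_greatest cset_ne) auto
  qed
  then show ?thesis using \<eta> by blast
qed

lemma ct_nonneg: "ct j \<ge> 0"
  unfolding ct_def' by (intro cInf_greatest cset_ne) auto

lemma ct_finite: "finite {j. ct j \<le> t}"
proof -
  obtain B where B: "B \<ge> 0" "\<forall>s\<in>{0..t+1}. LL s \<le> s * B" using LL_bounds by blast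
  obtain n where n: "arr G n \<omega> > (t + 1) * B" using Gdiv by blast
  have "j < n" if j: "ct j \<le> t" for j
  proof -
    have "Inf (cset j) < t + 1" using j ct_def' by simp
    then obtain s where s: "s \<in> cset j" "s < t + 1"
      using cInf_less_iff[OF cset_ne cset_bdd] by blast
    have "arr G j \<omega> \<le> LL s" using s by simp
    also have "\<dots> \<le> s * B" using B(2) s by auto
    also have "\<dots> \<le> (t + 1) * B" using s B by (intro mult_right_mono) auto
    finally have "arr G j \<omega> < arr G n \<omega>" using n by simp
    then show ?thesis using arr_mono[of G \<omega> n j] Gnn by (meson not_le)
  qed
  then have "{j. ct j \<le> t} \<subseteq> {..<n}" by auto
  then show ?thesis by (rule finite_subset) simp
qed

lemma ct_le:
  assumes "0 \<le> t" "arr G n \<omega> \<le> LL t" "j \<le> n"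
  shows "ct j \<le> t"
proof -
  have "arr G j \<omega> \<le> arr G n \<omega>" using arr_mono[of G \<omega> j n] Gnn assms by simp
  then have "t \<in> cset j" using assms by simp
  then show ?thesis unfolding ct_def' by (intro cInf_lower cset_bdd)
qed

context
  fixes U :: "nat \<Rightarrow> 'a \<Rightarrow> real" and p x :: real
  assumes Unn: "\<forall>k. U k \<omega> \<ge> 0"
begin

abbreviation "XX t \<equiv> surplus llow d E Y G U p x l0 t \<omega>"

lemma XX_le: "XX t \<le> x + p * t"
  unfolding surplus_def using Unn by (simp add: sum_nonneg)

lemma XX_early: "\<exists>\<eta>>0. \<forall>t. t < \<eta> \<longrightarrow> XX t = x + p * t"
proof -
  obtain \<eta> where \<eta>: "\<eta> > 0" "\<forall>j. ct j \<ge> \<eta>" using ct_pos by blast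
  have "XX t = x + p * t" if "t < \<eta>" for t
  proof -
    have "\<not> ct j \<le> t" for j using \<eta>(2) that by (smt (verit))
    then have "{j. ct j \<le> t} = {}" by simp
    then show ?thesis unfolding surplus_def by simp
  qed
  then show ?thesis using \<eta> by blast
qed

lemma XX_claims:
  assumes "0 \<le> t" "arr G n \<omega> \<le> LL t" "XX t \<ge> 0"
  shows "(\<Sum>j\<le>n. U j \<omega>) \<le> x + p * t"
proof -
  have "(\<Sum>j\<le>n. U j \<omega>) \<le> (\<Sum>j\<in>{j. ct j \<le> t}. U j \<omega>)"
    by (rule sum_mono2[OF ct_finite]) (use ct_le[OF assms(1,2)] Unn in auto)
  then show ?thesis using assms(3) unfolding surplus_def by simp
qed

end
end

lemma LS_bound:
  fixes F :: "real \<Rightarrow> real" and \<tau> :: ereal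
  assumes mono: "\<And>x y. x \<le> y \<Longrightarrow> F x \<le> F y" and rc: "\<And>a. continuous (at_right a) F"
    and neg: "\<And>s. s < 0 \<Longrightarrow> F s = 0"
    and bnd: "\<And>t. 0 \<le> t \<Longrightarrow> t < b \<Longrightarrow> ereal t < \<tau> \<Longrightarrow> F t \<le> B" and B: "B \<ge> 0"
  shows "emeasure (interval_measure F) {s. 0 \<le> s \<and> s < b \<and> ereal s < \<tau>} \<le> ennreal B"
proof (cases "{s. 0 \<le> s \<and> s < b \<and> ereal s < \<tau>} = {}")
  case True then show ?thesis by (simp only: True emeasure_empty) simp
next
  case False
  define S where "S = {s. 0 \<le> s \<and> s < b \<and> ereal s < \<tau>}"
  have Sne: "S \<noteq> {}" using False S_def by simp
  have Sbdd: "bdd_above S" unfolding S_def by (rule bdd_aboveI[of _ b]) auto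
  define m where "m = Sup S"
  have m0: "m \<ge> 0"
  proof -
    obtain s where "s \<in> S" using Sne by blast
    then show ?thesis unfolding m_def S_def using cSup_upper[OF _ Sbdd, of s] S_def by auto
  qed
  define A where "A n = {-1 <.. m - 1 / real (Suc n)}" for n
  have Ameas: "range A \<subseteq> sets (interval_measure F)" unfolding A_def sets_interval_measure by auto
  have Ainc: "incseq A"
  proof (rule incseq_SucI)
    fix n
    have "1 / real (Suc (Suc n)) \<le> 1 / real (Suc n)" by (rule divide_left_mono) auto
    then show "A n \<subseteq> A (Suc n)" unfolding A_def by auto
  qed
  have Ale: "emeasure (interval_measure F) (A n) \<le> ennreal B" for n
  proof -
    let ?c = "m - 1 / real (Suc n)"
    have "1 / real (Suc n) \<le> 1" by simp
    then have c1: "-1 \<le> ?c" using m0 by linarith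
    have "emeasure (interval_measure F) (A n) = ennreal (F ?c - F (-1))"
      unfolding A_def using c1 mono rc by (intro emeasure_interval_measure_Ioc) auto
    also have "F (-1) = 0" using neg by simp
    also have "F ?c \<le> B"
    proof (cases "?c < 0")
      case True then show ?thesis using neg B by simp
    next
      case False
      have "?c < m" by simp
      then obtain s where s: "s \<in> S" "?c < s" unfolding m_def using less_cSup_iff[OF Sne Sbdd] by blast
      have s2: "0 \<le> s" "s < b" "ereal s < \<tau>" using s(1) unfolding S_def by auto
      have "ereal ?c < ereal s" using s(2) by simp
      then have "ereal ?c < \<tau>" using s2(3) by (rule order.strict_trans)
      moreover have "?c < b" using s(2) s2 by linarith
      ultimately
      show ?thesis using bnd False by simp
    qed
    finally show ?thesis by (simp add: ennreal_leI)
  qed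
  have sub: "S \<subseteq> (\<Union>n. A n)"
  proof
    fix s assume s: "s \<in> S"
    then have s0: "0 \<le> s" "s < b" "ereal s < \<tau>" unfolding S_def by auto
    obtain z where z: "ereal s < ereal z" "ereal z < \<tau>" using ereal_dense2[OF s0(3)] by blast
    define s' where "s' = min z ((s + b) / 2)"
    have zs: "s < z" using z(1) by simp
    have s'1: "s < s'" unfolding s'_def using s0 zs by auto
    have s'2: "s' < b" unfolding s'_def using s0 by (simp add: min_less_iff_disj)
    have "ereal s' \<le> ereal z" unfolding s'_def by simp
    then have s'3: "ereal s' < \<tau>" using z(2) by (rule order.strict_trans1)
    have "s' \<in> S" unfolding S_def using s'1 s'2 s'3 s0 by simp
    moreover have "s < s'" by (rule s'1)
    ultimately have "s < m" unfolding m_def using cSup_upper[OF _ Sbdd] by (meson order_less_le_trans)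
    then obtain n where n: "n > 0" "inverse (real n) < m - s" using ex_inverse_of_nat_less by (metis diff_gt_0_iff_gt)
    have "1 / real (Suc n) \<le> 1 / real n" using n by (intro divide_left_mono) auto
    then have "1 / real (Suc n) \<le> inverse (real n)" by (simp add: inverse_eq_divide)
    then have "s \<in> A n" unfolding A_def using n s0 by auto
    then show "s \<in> (\<Union>n. A n)" by blast
  qed
  have "emeasure (interval_measure F) S \<le> emeasure (interval_measure F) (\<Union>n. A n)"
    by (rule emeasure_mono[OF sub]) (use Ameas in auto)
  also have "\<dots> = (SUP n. emeasure (interval_measure F) (A n))"
    using SUP_emeasure_incseq[OF Ameas Ainc] by simp
  also have "\<dots> \<le> ennreal B" using Ale by (intro SUP_least) auto
  finally show ?thesis unfolding S_def .
qed

lemma suc_le_pow2: "real (Suc m) \<le> 2 ^ m"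
proof (induction m)
  case 0 then show ?case by simp
next
  case (Suc m) then show ?case by simp
qed

lemma exp2_ge4: "exp (2::real) \<ge> 4"
proof -
  have "2 \<le> exp (1::real)" using exp_ge_add_one_self[of 1] by simp
  then have "2 * 2 \<le> exp (1::real) * exp 1" by (intro mult_mono) auto
  then show ?thesis by (simp add: exp_add[symmetric])
qed

lemma geo_term:
  fixes x p h :: real
  assumes "x \<ge> 0" "p \<ge> 0" "h \<ge> 0"
  shows "exp (-2) ^ m * (x + p * (real (Suc m) * h)) \<le> (x + p * h) * (1/2) ^ m"
proof -
  have r: "exp (-2::real) \<le> 1/4" using exp2_ge4 by (simp add: exp_minus field_simps)
  have "x + p * (real (Suc m) * h) \<le> real (Suc m) * (x + p * h)"
    using assms by (simp add: algebra_simps mult_nonneg_nonneg)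
  then have "exp (-2) ^ m * (x + p * (real (Suc m) * h)) \<le> exp (-2) ^ m * (real (Suc m) * (x + p * h))"
    by (intro mult_left_mono) auto
  also have "\<dots> \<le> (1/4) ^ m * (2 ^ m * (x + p * h))"
    using assms r suc_le_pow2[of m] by (intro mult_mono power_mono) auto
  also have "\<dots> = (x + p * h) * (1/2) ^ m"
    by (simp add: power_mult_distrib[symmetric] field_simps)
  finally show ?thesis .
qed

lemma ennreal_term_le_suminf: "(f::nat \<Rightarrow> ennreal) m \<le> suminf f"
  using sum_le_suminf[OF summableI, of "{m}" f] by simp

lemma disc_bound:
  fixes L :: "real \<Rightarrow> 'a \<Rightarrow> real" and \<tau> :: ereal
  assumes mono: "\<forall>s t. 0 \<le> s \<longrightarrow> s \<le> t \<longrightarrow> L s \<omega> \<le> L t \<omega>"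
    and rc: "\<forall>t\<ge>0. continuous (at_right t) (\<lambda>s. L s \<omega>)"
    and L0: "0 \<le> L 0 \<omega>"
    and bnd: "\<And>t. 0 \<le> t \<Longrightarrow> ereal t < \<tau> \<Longrightarrow> L t \<omega> \<le> x + p * t"
    and x: "x \<ge> 0" and p: "p \<ge> 0" and q: "q > 0" and \<epsilon>: "\<epsilon> > 0"
  shows "disc_div q L \<tau> \<omega> \<le> ennreal (x + p * \<epsilon>)
           + (if ereal \<epsilon> < \<tau> then ennreal (2 * (x + p * (2/q))) else 0)"
proof -
  define F where "F s = (if s < 0 then 0 else L s \<omega>)" for s
  have Fmono: "F a \<le> F b" if "a \<le> b" for a b
  proof -
    have "0 \<le> L b \<omega>" if "0 \<le> b" using mono L0 that by (meson order.trans order_refl)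
    then show ?thesis using that mono L0 unfolding F_def by auto
  qed
  have Fneg: "F s = 0" if "s < 0" for s using that unfolding F_def by simp
  have Frc: "continuous (at_right a) F" for a
  proof (cases "a < 0")
    case True
    have ev: "eventually (\<lambda>s. F s = 0) (at_right a)"
      using eventually_at_right_real[OF True] by eventually_elim (simp add: Fneg)
    have "(F \<longlongrightarrow> 0) (at_right a)" by (rule tendsto_eventually[OF ev])
    then show ?thesis unfolding continuous_within using Fneg[OF True] by simp
  next
    case False
    have ev: "eventually (\<lambda>s. L s \<omega> = F s) (at_right a)"
      using eventually_at_right_less[of a] by eventually_elim (use False in \<open>simp add: F_def\<close>)
    have "((\<lambda>s. L s \<omega>) \<longlongrightarrow> L a \<omega>) (at_right a)"
      using rc False unfolding continuous_within by simp
    then have "(F \<longlongrightarrow> L a \<omega>) (at_right a)" by (rule tendsto_cong[THEN iffD1, rotated]) (rule ev)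
    then show ?thesis unfolding continuous_within using False by (simp add: F_def)
  qed
  define h where "h = 2 / q"
  have h: "h > 0" unfolding h_def using q by simp
  define r where "r = exp (-2::real)"
  define S1 where "S1 = {s. 0 \<le> s \<and> s < \<epsilon> \<and> ereal s < \<tau>}"
  define Sm where "Sm m = {s. real m * h \<le> s \<and> s < real (Suc m) * h \<and> ereal s < \<tau>}" for m
  define c where "c = (if ereal \<epsilon> < \<tau> then 1 else 0 :: ennreal)"
  define g where "g s = indicator S1 s + c * (\<Sum>m. ennreal (r ^ m) * indicator (Sm m) s)" for s
  let ?\<mu> = "interval_measure F"
  have msets: "sets ?\<mu> = sets borel" by (rule sets_interval_measure)
  have S1m: "S1 \<in> sets ?\<mu>" unfolding msets S1_def by measurable
  have Smm: "Sm m \<in> sets ?\<mu>" for m unfolding msets Sm_def by measurable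
  have pw: "indicator {s. 0 \<le> s \<and> ereal s < \<tau>} s * ennreal (exp (- q * s)) \<le> g s" for s
  proof (cases "0 \<le> s \<and> ereal s < \<tau>")
    case False then show ?thesis by simp
  next
    case True
    note s = True
    show ?thesis
    proof (cases "s < \<epsilon>")
      case True
      then have "indicator S1 s = (1::ennreal)" unfolding S1_def using s by simp
      moreover have "ennreal (exp (- q * s)) \<le> 1"
      proof -
        have "exp (- q * s) \<le> 1" using q s by simp
        then have "ennreal (exp (- q * s)) \<le> ennreal 1" by (rule ennreal_leI)
        then show ?thesis by simp
      qed
      ultimately have "indicator {s. 0 \<le> s \<and> ereal s < \<tau>} s * ennreal (exp (- q * s)) \<le> indicator S1 s"
        using s by simp
      also have "\<dots> \<le> g s" unfolding g_def by simp
      finally show ?thesis .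
    next
      case False
      have "ereal \<epsilon> \<le> ereal s" using False by simp
      then have "ereal \<epsilon> < \<tau>" using s by (meson order.strict_trans1)
      then have c1: "c = 1" unfolding c_def by simp
      define m where "m = nat \<lfloor>s / h\<rfloor>"
      have sh: "0 \<le> s / h" using s h by simp
      have m1: "real m * h \<le> s"
      proof -
        have "real m = of_int \<lfloor>s / h\<rfloor>" unfolding m_def using sh by simp
        also have "\<dots> \<le> s / h" by simp
        finally show ?thesis using h by (simp add: field_simps)
      qed
      have m2: "s < real (Suc m) * h"
      proof -
        have "s / h < of_int \<lfloor>s / h\<rfloor> + 1" by linarith
        also have "of_int \<lfloor>s / h\<rfloor> = real m" unfolding m_def using sh by simp
        finally show ?thesis using h by (simp add: field_simps)
      qed
      have "exp (- q * s) \<le> exp (- q * (real m * h))" using m1 q by simp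
      also have "- q * (real m * h) = real m * (-2)" unfolding h_def using q by simp
      also have "exp (real m * (-2)) = r ^ m" unfolding r_def by (rule exp_of_nat_mult)
      finally have e: "exp (- q * s) \<le> r ^ m" .
      have "indicator {s. 0 \<le> s \<and> ereal s < \<tau>} s * ennreal (exp (- q * s)) = ennreal (exp (- q * s))"
        using s by simp
      also have "\<dots> \<le> ennreal (r ^ m) * indicator (Sm m) s"
        using m1 m2 s e unfolding Sm_def by (simp add: ennreal_leI)
      also have "\<dots> \<le> (\<Sum>m. ennreal (r ^ m) * indicator (Sm m) s)"
        by (rule ennreal_term_le_suminf)
      also have "\<dots> \<le> g s" unfolding g_def c1 by simp
      finally show ?thesis .
    qed
  qed
  have "disc_div q L \<tau> \<omega> = (\<integral>\<^sup>+ s. indicator {s. 0 \<le> s \<and> ereal s < \<tau>} s * ennreal (exp (- q * s)) \<partial>?\<mu>)"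
    unfolding disc_div_def F_def by simp
  also have "\<dots> \<le> (\<integral>\<^sup>+ s. g s \<partial>?\<mu>)" by (intro nn_integral_mono pw)
  also have "\<dots> = emeasure ?\<mu> S1 + c * (\<Sum>m. ennreal (r ^ m) * emeasure ?\<mu> (Sm m))"
  proof -
    have mi: "indicator A \<in> borel_measurable ?\<mu>" if "A \<in> sets ?\<mu>" for A :: "real set"
      using that by (rule borel_measurable_indicator)
    have ms: "(\<lambda>s. ennreal (r ^ m) * indicator (Sm m) s) \<in> borel_measurable ?\<mu>" for m
      using mi[OF Smm] by measurable
    have "(\<integral>\<^sup>+ s. g s \<partial>?\<mu>) = (\<integral>\<^sup>+ s. indicator S1 s \<partial>?\<mu>)
        + (\<integral>\<^sup>+ s. c * (\<Sum>m. ennreal (r ^ m) * indicator (Sm m) s) \<partial>?\<mu>)"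
      unfolding g_def by (rule nn_integral_add) (use mi[OF S1m] ms in auto)
    also have "(\<integral>\<^sup>+ s. c * (\<Sum>m. ennreal (r ^ m) * indicator (Sm m) s) \<partial>?\<mu>)
        = c * (\<integral>\<^sup>+ s. (\<Sum>m. ennreal (r ^ m) * indicator (Sm m) s) \<partial>?\<mu>)"
      by (rule nn_integral_cmult) (use ms in auto)
    also have "(\<integral>\<^sup>+ s. (\<Sum>m. ennreal (r ^ m) * indicator (Sm m) s) \<partial>?\<mu>)
        = (\<Sum>m. \<integral>\<^sup>+ s. ennreal (r ^ m) * indicator (Sm m) s \<partial>?\<mu>)"
      by (rule nn_integral_suminf) (rule ms)
    also have "\<dots> = (\<Sum>m. ennreal (r ^ m) * emeasure ?\<mu> (Sm m))"
      using nn_integral_cmult_indicator[OF Smm] by simp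
    also have "(\<integral>\<^sup>+ s. indicator S1 s \<partial>?\<mu>) = emeasure ?\<mu> S1"
      using S1m by simp
    finally show ?thesis .
  qed
  also have "\<dots> \<le> ennreal (x + p * \<epsilon>) + c * ennreal (2 * (x + p * h))"
  proof (rule add_mono)
    show "emeasure ?\<mu> S1 \<le> ennreal (x + p * \<epsilon>)" unfolding S1_def
    proof (rule LS_bound[OF Fmono Frc Fneg])
      fix t assume t: "0 \<le> t" "t < \<epsilon>" "ereal t < \<tau>"
      then have "L t \<omega> \<le> x + p * t" using bnd by simp
      also have "\<dots> \<le> x + p * \<epsilon>" using t p by (intro add_left_mono mult_left_mono) auto
      finally show "F t \<le> x + p * \<epsilon>" unfolding F_def using t by simp
    qed (use x p \<epsilon> in auto)
    have Smb: "emeasure ?\<mu> (Sm m) \<le> ennreal (x + p * (real (Suc m) * h))" for m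
    proof -
      have "Sm m \<subseteq> {s. 0 \<le> s \<and> s < real (Suc m) * h \<and> ereal s < \<tau>}"
        unfolding Sm_def using h by (auto intro: order_trans[rotated])
      then have "emeasure ?\<mu> (Sm m) \<le> emeasure ?\<mu> {s. 0 \<le> s \<and> s < real (Suc m) * h \<and> ereal s < \<tau>}"
        by (intro emeasure_mono) (auto simp: msets)
      also have "\<dots> \<le> ennreal (x + p * (real (Suc m) * h))"
      proof (rule LS_bound[OF Fmono Frc Fneg])
        fix t assume t: "0 \<le> t" "t < real (Suc m) * h" "ereal t < \<tau>"
        then have "L t \<omega> \<le> x + p * t" using bnd by simp
        also have "\<dots> \<le> x + p * (real (Suc m) * h)" using t p by (intro add_left_mono mult_left_mono) auto
        finally show "F t \<le> x + p * (real (Suc m) * h)" unfolding F_def using t by simp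
      qed (use x p h in auto)
      finally show ?thesis .
    qed
    have "(\<Sum>m. ennreal (r ^ m) * emeasure ?\<mu> (Sm m)) \<le> (\<Sum>m. ennreal ((x + p * h) * (1/2) ^ m))"
    proof (rule suminf_le[OF _ summableI summableI])
      fix m
      have "ennreal (r ^ m) * emeasure ?\<mu> (Sm m) \<le> ennreal (r ^ m) * ennreal (x + p * (real (Suc m) * h))"
        by (intro mult_left_mono Smb) auto
      also have "\<dots> = ennreal (r ^ m * (x + p * (real (Suc m) * h)))"
      proof -
        have "0 \<le> x + p * (real (Suc m) * h)" using x p h by simp
        moreover have "0 \<le> r ^ m" unfolding r_def by simp
        ultimately show ?thesis by (simp add: ennreal_mult)
      qed
      also have "\<dots> \<le> ennreal ((x + p * h) * (1/2) ^ m)"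
        unfolding r_def using geo_term[OF x p] h by (intro ennreal_leI) auto
      finally show "ennreal (r ^ m) * emeasure ?\<mu> (Sm m) \<le> ennreal ((x + p * h) * (1/2) ^ m)" .
    qed
    also have "\<dots> = ennreal (\<Sum>m. (x + p * h) * (1/2) ^ m)"
      using x p h by (intro suminf_ennreal2 summable_mult summable_geometric) auto
    also have "(\<Sum>m. (x + p * h) * (1/2::real) ^ m) = 2 * (x + p * h)"
      using suminf_geometric[of "1/2::real"] by (simp add: suminf_mult)
    finally have "(\<Sum>m. ennreal (r ^ m) * emeasure ?\<mu> (Sm m)) \<le> ennreal (2 * (x + p * h))" .
    then show "c * (\<Sum>m. ennreal (r ^ m) * emeasure ?\<mu> (Sm m)) \<le> c * ennreal (2 * (x + p * h))"
      by (rule mult_left_mono) simp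
  qed
  also have "\<dots> = ennreal (x + p * \<epsilon>)
           + (if ereal \<epsilon> < \<tau> then ennreal (2 * (x + p * (2/q))) else 0)"
    unfolding c_def h_def by simp
  finally show ?thesis .
qed

lemma prod_reindex_pair: "(\<Prod>j\<in>{i}\<times>{..n}. f j) = (\<Prod>k\<le>n. f (i, k))"
proof -
  have "{i} \<times> {..n} = (\<lambda>k. (i, k)) ` {..n}" by auto
  moreover have "inj_on (\<lambda>k. (i, k)) {..n}" by (auto simp: inj_on_def)
  ultimately show ?thesis by (simp add: prod.reindex)
qed

lemma prod_mono_ennreal:
  fixes f g :: "'b \<Rightarrow> ennreal"
  assumes "\<And>i. i \<in> A \<Longrightarrow> f i \<le> g i"
  shows "prod f A \<le> prod g A"
proof (cases "finite A")
  case True then show ?thesis using assms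
    by (induction A rule: finite_induct) (auto intro!: mult_mono)
qed simp

lemma (in prob_space) exp_bound:
  fixes Z :: "'a \<Rightarrow> real"
  assumes rv: "Z \<in> borel_measurable M" and nn: "AE \<omega> in M. Z \<omega> \<ge> 0"
    and small: "measure M {\<omega>\<in>space M. Z \<omega> \<le> \<delta>} \<le> a" and \<delta>: "\<delta> > 0"
  shows "(\<integral>\<^sup>+\<omega>. ennreal (exp (- Z \<omega>)) \<partial>M) \<le> ennreal (exp (-\<delta>) + (1 - exp (-\<delta>)) * a)"
proof -
  have Am: "{\<omega>\<in>space M. Z \<omega> \<le> \<delta>} \<in> sets M" using rv by measurable
  have e1: "exp (-\<delta>) < 1" using \<delta> by simp
  have "AE \<omega> in M. ennreal (exp (- Z \<omega>)) \<le> ennreal (exp (-\<delta>)) + ennreal (1 - exp (-\<delta>)) * indicator {\<omega>\<in>space M. Z \<omega> \<le> \<delta>} \<omega>"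
    using nn AE_space
  proof eventually_elim
    case (elim \<omega>)
    show ?case
    proof (cases "\<omega> \<in> space M \<and> Z \<omega> \<le> \<delta>")
      case True
      then have "ennreal (exp (-\<delta>)) + ennreal (1 - exp (-\<delta>)) * indicator {\<omega>\<in>space M. Z \<omega> \<le> \<delta>} \<omega>
          = ennreal (exp (-\<delta>)) + ennreal (1 - exp (-\<delta>))" using True by simp
      also have "\<dots> = ennreal (exp (-\<delta>) + (1 - exp (-\<delta>)))"
        by (rule ennreal_plus[symmetric]) (use e1 in auto)
      also have "\<dots> = ennreal 1" by simp
      finally show ?thesis using elim by (simp add: ennreal_leI)
    next
      case False
      then have "Z \<omega> > \<delta>" using elim by auto
      then have "exp (- Z \<omega>) \<le> exp (-\<delta>)" by auto
      then show ?thesis using False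
        by (auto intro!: ennreal_leI order_trans[OF _ add_increasing2[OF zero_le]] simp: indicator_def)
    qed
  qed
  then have "(\<integral>\<^sup>+\<omega>. ennreal (exp (- Z \<omega>)) \<partial>M) \<le>
      (\<integral>\<^sup>+\<omega>. ennreal (exp (-\<delta>)) + ennreal (1 - exp (-\<delta>)) * indicator {\<omega>\<in>space M. Z \<omega> \<le> \<delta>} \<omega> \<partial>M)"
    by (rule nn_integral_mono_AE)
  also have "\<dots> = ennreal (exp (-\<delta>)) + ennreal (1 - exp (-\<delta>)) * emeasure M {\<omega>\<in>space M. Z \<omega> \<le> \<delta>}"
    using Am by (subst nn_integral_add) (auto simp: emeasure_space_1 nn_integral_cmult_indicator)
  also have "\<dots> \<le> ennreal (exp (-\<delta>)) + ennreal (1 - exp (-\<delta>)) * ennreal a"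
    using small by (intro add_left_mono mult_left_mono) (auto simp: emeasure_eq_measure intro: ennreal_leI)
  also have "\<dots> = ennreal (exp (-\<delta>) + (1 - exp (-\<delta>)) * a)"
  proof -
    have "a \<ge> 0" using small measure_nonneg order_trans by blast
    then show ?thesis using e1 by (simp add: ennreal_plus ennreal_mult)
  qed
  finally show ?thesis .
qed

lemma (in prob_space) sum_tail:
  fixes PF :: "nat \<times> nat \<Rightarrow> 'a \<Rightarrow> real"
  assumes ind: "indep_vars (\<lambda>_. borel) PF ({0..3} \<times> UNIV)" and i: "i \<in> {0..3}"
    and nn: "\<And>k. AE \<omega> in M. PF (i,k) \<omega> \<ge> 0"
    and small: "\<And>k. measure M {\<omega>\<in>space M. PF (i,k) \<omega> \<le> \<delta>} \<le> a" and \<delta>: "\<delta> > 0"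
  shows "measure M {\<omega>\<in>space M. (\<Sum>k\<le>n. PF (i,k) \<omega>) \<le> K}
           \<le> exp K * (exp (-\<delta>) + (1 - exp (-\<delta>)) * a) ^ Suc n"
proof -
  define \<rho> where "\<rho> = exp (-\<delta>) + (1 - exp (-\<delta>)) * a"
  have a0: "a \<ge> 0" using small[of 0] measure_nonneg order_trans by blast
  have \<rho>0: "\<rho> \<ge> 0" unfolding \<rho>_def using a0 \<delta> by (simp add: add_nonneg_nonneg)
  have rv: "PF j \<in> borel_measurable M" if "j \<in> {0..3} \<times> UNIV" for j
    using ind that unfolding indep_vars_def by auto
  have rvi: "PF (i, k) \<in> borel_measurable M" for k using rv i by auto
  have ind2: "indep_vars (\<lambda>_. borel) (\<lambda>j \<omega>. ennreal (exp (- PF j \<omega>))) ({i} \<times> {..n})"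
  proof (rule indep_vars_subset)
    show "indep_vars (\<lambda>_. borel) (\<lambda>j \<omega>. ennreal (exp (- PF j \<omega>))) ({0..3} \<times> UNIV)"
      by (rule indep_vars_compose2[OF ind]) measurable
  qed (use i in auto)
  have "(\<integral>\<^sup>+\<omega>. (\<Prod>j\<in>{i}\<times>{..n}. ennreal (exp (- PF j \<omega>))) \<partial>M)
      = (\<Prod>j\<in>{i}\<times>{..n}. \<integral>\<^sup>+\<omega>. ennreal (exp (- PF j \<omega>)) \<partial>M)"
    by (rule indep_vars_nn_integral[OF _ ind2]) auto
  then have prodeq: "(\<integral>\<^sup>+\<omega>. (\<Prod>k\<le>n. ennreal (exp (- PF (i,k) \<omega>))) \<partial>M)
      = (\<Prod>k\<le>n. \<integral>\<^sup>+\<omega>. ennreal (exp (- PF (i,k) \<omega>)) \<partial>M)"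
    by (simp only: prod_reindex_pair)
  have Sm: "{\<omega>\<in>space M. (\<Sum>k\<le>n. PF (i,k) \<omega>) \<le> K} \<in> sets M" using rvi by measurable
  have "emeasure M {\<omega>\<in>space M. (\<Sum>k\<le>n. PF (i,k) \<omega>) \<le> K}
      = (\<integral>\<^sup>+\<omega>. indicator {\<omega>\<in>space M. (\<Sum>k\<le>n. PF (i,k) \<omega>) \<le> K} \<omega> \<partial>M)"
    using Sm by simp
  also have "\<dots> \<le> (\<integral>\<^sup>+\<omega>. ennreal (exp K) * (\<Prod>k\<le>n. ennreal (exp (- PF (i,k) \<omega>))) \<partial>M)"
  proof (rule nn_integral_mono)
    fix \<omega> assume "\<omega> \<in> space M"
    have "(\<Prod>k\<le>n. ennreal (exp (- PF (i,k) \<omega>))) = ennreal (\<Prod>k\<le>n. exp (- PF (i,k) \<omega>))"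
      by (rule prod_ennreal) simp
    also have "(\<Prod>k\<le>n. exp (- PF (i,k) \<omega>)) = exp (- (\<Sum>k\<le>n. PF (i,k) \<omega>))"
      by (simp add: exp_sum[symmetric] sum_negf)
    finally have "ennreal (exp K) * (\<Prod>k\<le>n. ennreal (exp (- PF (i,k) \<omega>)))
        = ennreal (exp (K - (\<Sum>k\<le>n. PF (i,k) \<omega>)))"
      by (simp add: ennreal_mult[symmetric] exp_diff exp_minus divide_inverse)
    then show "indicator {\<omega>\<in>space M. (\<Sum>k\<le>n. PF (i,k) \<omega>) \<le> K} \<omega>
        \<le> ennreal (exp K) * (\<Prod>k\<le>n. ennreal (exp (- PF (i,k) \<omega>)))"
      by (auto simp: indicator_def intro!: ennreal_leI[of 1, simplified])
  qed
  also have "\<dots> = ennreal (exp K) * (\<integral>\<^sup>+\<omega>. (\<Prod>k\<le>n. ennreal (exp (- PF (i,k) \<omega>))) \<partial>M)"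
    by (rule nn_integral_cmult) (use rvi in measurable)
  also have "\<dots> = ennreal (exp K) * (\<Prod>k\<le>n. \<integral>\<^sup>+\<omega>. ennreal (exp (- PF (i,k) \<omega>)) \<partial>M)"
    by (simp only: prodeq)
  also have "\<dots> \<le> ennreal (exp K) * (\<Prod>k\<le>n. ennreal \<rho>)"
    unfolding \<rho>_def by (intro mult_left_mono prod_mono_ennreal exp_bound rvi nn small \<delta>) auto
  also have "\<dots> = ennreal (exp K * \<rho> ^ Suc n)"
    using \<rho>0 by (simp add: prod_ennreal ennreal_mult ennreal_power)
  finally show ?thesis unfolding \<rho>_def[symmetric] using \<rho>0
    by (simp add: emeasure_eq_measure ennreal_le_iff)
qed

lemma (in prob_space) sum_div_AE:
  fixes PF :: "nat \<times> nat \<Rightarrow> 'a \<Rightarrow> real"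
  assumes ind: "indep_vars (\<lambda>_. borel) PF ({0..3} \<times> UNIV)" and i: "i \<in> {0..3}"
    and nn: "\<And>k. AE \<omega> in M. PF (i,k) \<omega> \<ge> 0"
    and small: "\<And>k. measure M {\<omega>\<in>space M. PF (i,k) \<omega> \<le> \<delta>} \<le> a" and \<delta>: "\<delta> > 0" and a1: "a < 1"
  shows "AE \<omega> in M. \<forall>K::real. \<exists>n. (\<Sum>k\<le>n. PF (i,k) \<omega>) > K"
proof -
  define \<rho> where "\<rho> = exp (-\<delta>) + (1 - exp (-\<delta>)) * a"
  have a0: "a \<ge> 0" using small[of 0] measure_nonneg order_trans by blast
  have e1: "exp (-\<delta>) < 1" using \<delta> by simp
  have \<rho>0: "\<rho> \<ge> 0" unfolding \<rho>_def using a0 e1 by (simp add: add_nonneg_nonneg)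
  have \<rho>1: "\<rho> < 1"
  proof -
    have "(1 - exp (-\<delta>)) * a < (1 - exp (-\<delta>)) * 1" using e1 a1 by (intro mult_strict_left_mono) auto
    then show ?thesis unfolding \<rho>_def by simp
  qed
  have rv: "PF (i, k) \<in> borel_measurable M" for k
    using ind i unfolding indep_vars_def by auto
  have allK: "AE \<omega> in M. \<exists>n. (\<Sum>k\<le>n. PF (i,k) \<omega>) > real K" for K :: nat
  proof -
    define N where "N = {\<omega>\<in>space M. \<forall>n. (\<Sum>k\<le>n. PF (i,k) \<omega>) \<le> real K}"
    have Nm: "N \<in> sets M" unfolding N_def using rv by measurable
    have le: "measure M N \<le> exp (real K) * \<rho> ^ Suc n" for n
    proof -
      have "measure M N \<le> measure M {\<omega>\<in>space M. (\<Sum>k\<le>n. PF (i,k) \<omega>) \<le> real K}"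
      proof (rule finite_measure_mono)
        show "N \<subseteq> {\<omega>\<in>space M. (\<Sum>k\<le>n. PF (i,k) \<omega>) \<le> real K}" unfolding N_def by blast
        show "{\<omega>\<in>space M. (\<Sum>k\<le>n. PF (i,k) \<omega>) \<le> real K} \<in> sets M" using rv by measurable
      qed
      also have "\<dots> \<le> exp (real K) * \<rho> ^ Suc n"
        unfolding \<rho>_def by (rule sum_tail[OF ind i nn small \<delta>])
      finally show ?thesis .
    qed
    have lim: "(\<lambda>n. exp (real K) * \<rho> ^ Suc n) \<longlonglongrightarrow> 0"
    proof -
      have "(\<lambda>n. \<rho> ^ n) \<longlonglongrightarrow> 0" using \<rho>0 \<rho>1 by (intro LIMSEQ_power_zero) auto
      then have "(\<lambda>n. \<rho> ^ Suc n) \<longlonglongrightarrow> 0" by (rule LIMSEQ_Suc)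
      then show ?thesis by (rule tendsto_mult_right_zero)
    qed
    have "measure M N \<le> 0"
      by (rule tendsto_le[OF trivial_limit_sequentially lim tendsto_const]) (intro always_eventually allI le)
    then have "measure M N = 0" using measure_nonneg[of M N] by linarith
    then have "emeasure M N = 0" by (simp add: emeasure_eq_measure)
    then have "N \<in> null_sets M" using Nm by (intro null_setsI)
    from AE_not_in[OF this] AE_space show ?thesis by eventually_elim (auto simp: N_def not_le)
  qed
  have "AE \<omega> in M. \<forall>K::nat. \<exists>n. (\<Sum>k\<le>n. PF (i,k) \<omega>) > real K"
    by (rule AE_all_countable[THEN iffD2]) (rule allI, rule allK)
  then show ?thesis
  proof eventually_elim
    case (elim \<omega>)
    show ?case
    proof
      fix K :: real
      obtain K' :: nat where K': "K < real K'" using reals_Archimedean2 by blast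
      obtain n where "(\<Sum>k\<le>n. PF (i,k) \<omega>) > real K'" using elim by blast
      then have "(\<Sum>k\<le>n. PF (i,k) \<omega>) > K" using K' by linarith
      then show "\<exists>n. (\<Sum>k\<le>n. PF (i,k) \<omega>) > K" by blast
    qed
  qed
qed

lemma (in prob_space) AE_pos_of_measure0:
  fixes Z :: "'a \<Rightarrow> real"
  assumes "Z \<in> borel_measurable M" "measure M {\<omega>\<in>space M. Z \<omega> \<le> 0} = 0"
  shows "AE \<omega> in M. Z \<omega> > 0"
proof -
  have m: "{\<omega>\<in>space M. Z \<omega> \<le> 0} \<in> sets M" using assms(1) by measurable
  then have "{\<omega>\<in>space M. Z \<omega> \<le> 0} \<in> null_sets M"
    using assms(2) by (simp add: emeasure_eq_measure null_setsI)
  from AE_not_in[OF this] AE_space show ?thesis by eventually_elim auto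
qed

lemma (in prob_space) cdf_small:
  fixes Z :: "'a \<Rightarrow> real"
  assumes rv: "Z \<in> borel_measurable M" and z: "measure M {\<omega>\<in>space M. Z \<omega> \<le> 0} = 0"
  shows "\<exists>\<delta>>0. measure M {\<omega>\<in>space M. Z \<omega> \<le> \<delta>} < 1"
proof -
  define A where "A n = {\<omega>\<in>space M. Z \<omega> \<le> 1 / real (Suc n)}" for n
  have Am: "range A \<subseteq> sets M" unfolding A_def using rv by auto
  have Ad: "decseq A"
  proof (rule decseq_SucI)
    fix n
    have "1 / real (Suc (Suc n)) \<le> 1 / real (Suc n)" by (rule divide_left_mono) auto
    then show "A (Suc n) \<subseteq> A n" unfolding A_def by auto
  qed
  have "(\<Inter>n. A n) = {\<omega>\<in>space M. Z \<omega> \<le> 0}"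
  proof (intro equalityI subsetI)
    fix \<omega> assume "\<omega> \<in> (\<Inter>n. A n)"
    then have w: "\<omega> \<in> space M" "\<And>n. Z \<omega> \<le> 1 / real (Suc n)" unfolding A_def by auto
    have "Z \<omega> \<le> 0"
    proof (rule ccontr)
      assume "\<not> Z \<omega> \<le> 0"
      then have "0 < Z \<omega>" by simp
      then obtain n where n: "n > 0" "inverse (real n) < Z \<omega>" using ex_inverse_of_nat_less by blast
      have "1 / real (Suc n) \<le> 1 / real n" using n by (intro divide_left_mono) auto
      then have "1 / real (Suc n) < Z \<omega>" using n(2) by (simp add: inverse_eq_divide)
      then show False using w(2)[of n] by linarith
    qed
    then show "\<omega> \<in> {\<omega>\<in>space M. Z \<omega> \<le> 0}" using w(1) by blast
  next
    fix \<omega> assume w: "\<omega> \<in> {\<omega>\<in>space M. Z \<omega> \<le> 0}"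
    have "\<omega> \<in> A n" for n
    proof -
      have h0: "0 \<le> 1 / real (Suc n)" by simp
      have z: "Z \<omega> \<le> 0" "\<omega> \<in> space M" using w by auto
      have "Z \<omega> \<le> 1 / real (Suc n)" using z(1) h0 by linarith
      then show ?thesis using z(2) unfolding A_def by blast
    qed
    then show "\<omega> \<in> (\<Inter>n. A n)" by blast
  qed
  then have "(\<lambda>n. measure M (A n)) \<longlonglongrightarrow> 0"
    using finite_Lim_measure_decseq[OF Am Ad] z by simp
  then have "eventually (\<lambda>n. measure M (A n) < 1) sequentially"
    by (rule order_tendstoD) simp
  then obtain n where "measure M (A n) < 1" by (meson eventually_sequentially order_refl)
  then show ?thesis unfolding A_def by (intro exI[of _ "1 / real (Suc n)"]) auto
qed

lemma disc_lower:
  fixes L :: "real \<Rightarrow> 'a \<Rightarrow> real" and \<tau> :: ereal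
  assumes c: "c \<ge> 0" and \<tau>: "ereal 0 < \<tau>" and L: "\<And>s. L s \<omega> = c"
  shows "ennreal c \<le> disc_div q L \<tau> \<omega>"
proof -
  define F where "F s = (if s < 0 then 0 else c)" for s :: real
  have Feq: "(\<lambda>s. if s < 0 then 0 else L s \<omega>) = F" unfolding F_def L by simp
  have Fmono: "F a \<le> F b" if "a \<le> b" for a b using that c unfolding F_def by auto
  have Frc: "continuous (at_right a) F" for a
  proof (cases "a < 0")
    case True
    have ev: "eventually (\<lambda>s. F s = 0) (at_right a)"
      using eventually_at_right_real[OF True] by eventually_elim (simp add: F_def)
    have "(F \<longlongrightarrow> 0) (at_right a)" by (rule tendsto_eventually[OF ev])
    then show ?thesis unfolding continuous_within using True by (simp add: F_def)
  next
    case False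
    have ev: "eventually (\<lambda>s. F s = c) (at_right a)"
      using eventually_at_right_less[of a] by eventually_elim (use False in \<open>simp add: F_def\<close>)
    have "(F \<longlongrightarrow> c) (at_right a)" by (rule tendsto_eventually[OF ev])
    then show ?thesis unfolding continuous_within using False by (simp add: F_def)
  qed
  let ?\<mu> = "interval_measure F"
  have msets: "sets ?\<mu> = sets borel" by (rule sets_interval_measure)
  have Ioc: "emeasure ?\<mu> {a<..b} = ennreal (F b - F a)" if "a \<le> b" for a b
    using that Fmono Frc by (intro emeasure_interval_measure_Ioc) auto
  have m1: "emeasure ?\<mu> {-1<..0} = ennreal c" using Ioc[of "-1" 0] by (simp add: F_def)
  have m2: "emeasure ?\<mu> {-1<..<0} = 0"
  proof -
    define B where "B n = {-1 <.. - 1 / real (Suc n)}" for n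
    have Bm: "range B \<subseteq> sets ?\<mu>" unfolding B_def msets by auto
    have B0: "emeasure ?\<mu> (B n) = 0" for n
    proof -
      have "1 / real (Suc n) \<le> 1" by simp
      then have "-1 \<le> - 1 / real (Suc n)" by simp
      then show ?thesis unfolding B_def using Ioc by (simp add: F_def)
    qed
    have sub: "{-1<..<0} \<subseteq> (\<Union>n. B n)"
    proof
      fix s :: real assume s: "s \<in> {-1<..<0}"
      then have "0 < - s" by simp
      then obtain n where n: "n > 0" "inverse (real n) < - s" using ex_inverse_of_nat_less by blast
      have "1 / real (Suc n) \<le> 1 / real n" using n by (intro divide_left_mono) auto
      then have "1 / real (Suc n) < - s" using n(2) by (simp add: inverse_eq_divide)
      then have "s \<in> B n" unfolding B_def using s by auto
      then show "s \<in> (\<Union>n. B n)" by blast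
    qed
    have "emeasure ?\<mu> {-1<..<0} \<le> emeasure ?\<mu> (\<Union>n. B n)"
      by (rule emeasure_mono[OF sub]) (use Bm in auto)
    also have "\<dots> \<le> (\<Sum>n. emeasure ?\<mu> (B n))" by (rule emeasure_subadditive_countably[OF Bm])
    also have "\<dots> = 0" using B0 by simp
    finally show ?thesis by simp
  qed
  have "emeasure ?\<mu> {0} + emeasure ?\<mu> {-1<..<0} = emeasure ?\<mu> ({0} \<union> {-1<..<0})"
    by (rule plus_emeasure) (auto simp: msets)
  also have "{0} \<union> {-1<..<0} = {-1<..(0::real)}" by auto
  finally have m0: "emeasure ?\<mu> {0} = ennreal c" using m1 m2 by simp
  have "ennreal c = (\<integral>\<^sup>+ s. indicator {0} s \<partial>?\<mu>)" using m0 by (simp add: msets)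
  also have "\<dots> \<le> (\<integral>\<^sup>+ s. indicator {s. 0 \<le> s \<and> ereal s < \<tau>} s * ennreal (exp (- q * s)) \<partial>?\<mu>)"
    by (rule nn_integral_mono) (use \<tau> in \<open>auto simp: indicator_def\<close>)
  also have "\<dots> = disc_div q L \<tau> \<omega>" unfolding disc_div_def Feq ..
  finally show ?thesis .
qed

lemma Lminus_const: "Lminus (\<lambda>t \<omega>. f \<omega>) t \<omega> = (if t \<le> 0 then 0 else f \<omega>)"
  unfolding Lminus_def by simp

lemma ruin_lower:
  assumes "\<And>t. 0 \<le> t \<Longrightarrow> t < \<eta> \<Longrightarrow> X t \<omega> - Lminus L t \<omega> \<ge> 0"
  shows "ereal \<eta> \<le> ruin_time X L \<omega>"
  unfolding ruin_time_def
proof (rule Inf_greatest)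
  fix z assume "z \<in> {ereal t |t. 0 \<le> t \<and> X t \<omega> - Lminus L t \<omega> < 0}"
  then obtain t where t: "z = ereal t" "0 \<le> t" "X t \<omega> - Lminus L t \<omega> < 0" by blast
  have "\<eta> \<le> t"
  proof (rule ccontr)
    assume "\<not> \<eta> \<le> t"
    then show False using assms[of t] t by simp
  qed
  then show "ereal \<eta> \<le> z" using t by simp
qed

lemma ruin_ok:
  assumes "0 \<le> t" "ereal t < ruin_time X L \<omega>"
  shows "X t \<omega> - Lminus L t \<omega> \<ge> 0"
proof (rule ccontr)
  assume "\<not> X t \<omega> - Lminus L t \<omega> \<ge> 0"
  then have "ereal t \<in> {ereal t |t. 0 \<le> t \<and> X t \<omega> - Lminus L t \<omega> < 0}" using assms by auto
  then have "ruin_time X L \<omega> \<le> ereal t" unfolding ruin_time_def by (rule Inf_lower)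
  then show False using assms(2) by simp
qed

lemma completed_in:
  assumes A: "A \<in> sets M" and N: "space M - A \<in> null_sets M"
    and S: "S = space M \<or> S = {} \<or> S = A \<or> S = space M - A"
  shows "S \<in> completed M (sigma_sets (space M) X)"
proof -
  have sp: "space M \<in> sigma_sets (space M) X" by (rule sigma_sets_top)
  have em: "{} \<in> sigma_sets (space M) X" by (rule sigma_sets.Empty)
  have Asub: "A \<subseteq> space M" using A by (rule sets.sets_into_space)
  have e0: "{} \<in> null_sets M" by simp
  have "S \<subseteq> space M \<and> (\<exists>B\<in>sigma_sets (space M) X. \<exists>N'\<in>null_sets M. (S - B) \<union> (B - S) \<subseteq> N')"
    using S
  proof (elim disjE)
    assume "S = space M" then show ?thesis using sp e0 by blast
  next
    assume "S = {}" then show ?thesis using em e0 by blast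
  next
    assume "S = A"
    moreover have "(A - space M) \<union> (space M - A) \<subseteq> space M - A" using Asub by auto
    ultimately show ?thesis using sp N Asub by blast
  next
    assume "S = space M - A"
    moreover have "((space M - A) - {}) \<union> ({} - (space M - A)) \<subseteq> space M - A" by auto
    ultimately show ?thesis using em N by blast
  qed
  then show ?thesis unfolding completed_def by simp
qed

lemma good_loc:
  assumes "d > 0" "llow \<ge> 0" "l0 \<ge> llow" "\<forall>k. E k \<omega> \<ge> 0" "\<forall>k. Y k \<omega> \<ge> 0"
    "\<forall>K. \<exists>n. arr E n \<omega> > K" "\<forall>K. \<exists>n. (\<Sum>k\<le>n. Y k \<omega>) > K"
    "\<forall>k. G k \<omega> > 0" "\<forall>K. \<exists>n. arr G n \<omega> > K"
  shows "pthG llow d l0 E Y \<omega> G"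
  using assms unfolding pthG_def pth_def pthG_axioms_def by blast

theorem proposition3p7:
  fixes M :: "'a measure"
    and E Y G U :: "nat \<Rightarrow> 'a \<Rightarrow> real"
    and F_U F_Y :: "real \<Rightarrow> real"
    and p q d \<beta> llow lav x :: real
  assumes "prob_space M"
    and "p > 0" and "q > 0" and "d > 0" and "\<beta> > 0" and "llow \<ge> 0"
    and "\<And>k. distributed M lborel (E k) (exponential_density \<beta>)"
    and "\<And>k. distributed M lborel (G k) (exponential_density 1)"
    and "\<And>k. Y k \<in> borel_measurable M" and "\<And>k. U k \<in> borel_measurable M"
    and "\<And>k y. measure M {\<omega>\<in>space M. Y k \<omega> \<le> y} = F_Y y"
    and "\<And>k u. measure M {\<omega>\<in>space M. U k \<omega> \<le> u} = F_U u"
    and "F_Y 0 = 0" and "F_U 0 = 0"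
    and "integrable M (Y 0)" and "integrable M (U 0)"
    and "prob_space.indep_vars M (\<lambda>_. borel) (prim_family E Y G U) ({0..3} \<times> UNIV)"
    and "\<And>l0. l0 \<ge> llow \<Longrightarrow>
           ((\<lambda>t. (\<integral>\<omega>. Lam llow d E Y l0 t \<omega> \<partial>M) / t) \<longlongrightarrow> lav) at_top"
    and "\<exists>\<eta>>0. p = (1 + \<eta>) * (\<integral>\<omega>. U 0 \<omega> \<partial>M) * lav"
    and "x \<ge> 0"
  shows "((\<lambda>l0. Vfun M q llow d E Y G U p x l0) \<longlongrightarrow> ennreal x) at_top"
proof -
  interpret prob_space M by (rule assms(1))
  have p: "p > 0" and q: "q > 0" and d: "d > 0" and \<beta>: "\<beta> > 0" and llow: "llow \<ge> 0" and x: "x \<ge> 0"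
    using assms by auto
  define PF where "PF = prim_family E Y G U"
  have ind: "indep_vars (\<lambda>_. borel) PF ({0..3} \<times> UNIV)" using assms(17) unfolding PF_def .
  have PF0: "PF (0, k) = E k" for k unfolding PF_def prim_family_def by simp
  have PF1: "PF (1, k) = Y k" for k unfolding PF_def prim_family_def by simp
  have PF2: "PF (2, k) = G k" for k unfolding PF_def prim_family_def by simp
  have PF3: "PF (3, k) = U k" for k unfolding PF_def prim_family_def by simp
  have rv: "PF j \<in> borel_measurable M" if "j \<in> {0..3} \<times> UNIV" for j
    using ind that unfolding indep_vars_def by auto
  have rvE: "E k \<in> borel_measurable M" for k using rv[of "(0,k)"] PF0 by simp
  have rvG: "G k \<in> borel_measurable M" for k using rv[of "(2,k)"] PF2 by simp
  have rvY: "Y k \<in> borel_measurable M" for k by (rule assms(9))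
  have rvU: "U k \<in> borel_measurable M" for k by (rule assms(10))
  have mE0: "measure M {\<omega>\<in>space M. E k \<omega> \<le> 0} = 0" for k
    using exponential_distributedD_le[OF assms(7)[of k] order_refl \<beta>] by simp
  have mG0: "measure M {\<omega>\<in>space M. G k \<omega> \<le> 0} = 0" for k
    using exponential_distributedD_le[OF assms(8)[of k] order_refl zero_less_one] by simp
  have mY0: "measure M {\<omega>\<in>space M. Y k \<omega> \<le> 0} = 0" for k using assms(11,13) by simp
  have mU0: "measure M {\<omega>\<in>space M. U k \<omega> \<le> 0} = 0" for k using assms(12,14) by simp
  have aE: "AE \<omega> in M. E k \<omega> > 0" for k by (rule AE_pos_of_measure0[OF rvE mE0])
  have aG: "AE \<omega> in M. G k \<omega> > 0" for k by (rule AE_pos_of_measure0[OF rvG mG0])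
  have aY: "AE \<omega> in M. Y k \<omega> > 0" for k by (rule AE_pos_of_measure0[OF rvY mY0])
  have aU: "AE \<omega> in M. U k \<omega> > 0" for k by (rule AE_pos_of_measure0[OF rvU mU0])
  have smE: "measure M {\<omega>\<in>space M. PF (0,k) \<omega> \<le> 1} \<le> 1 - exp (- \<beta>)" for k
    using exponential_distributedD_le[OF assms(7)[of k] _ \<beta>, of 1] PF0 by simp
  have smG: "measure M {\<omega>\<in>space M. PF (2,k) \<omega> \<le> 1} \<le> 1 - exp (- 1)" for k
    using exponential_distributedD_le[OF assms(8)[of k], of 1] PF2 by simp
  obtain \<delta>Y where \<delta>Y: "\<delta>Y > 0" "measure M {\<omega>\<in>space M. Y 0 \<omega> \<le> \<delta>Y} < 1"
    using cdf_small[OF rvY mY0] by blast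
  obtain \<delta>U where \<delta>U: "\<delta>U > 0" "measure M {\<omega>\<in>space M. U 0 \<omega> \<le> \<delta>U} < 1"
    using cdf_small[OF rvU mU0] by blast
  define aY where "aY = F_Y \<delta>Y"
  define aU where "aU = F_U \<delta>U"
  have aY1: "aY < 1" using \<delta>Y assms(11) unfolding aY_def by simp
  have aU1: "aU < 1" using \<delta>U assms(12) unfolding aU_def by simp
  have smY: "measure M {\<omega>\<in>space M. PF (1,k) \<omega> \<le> \<delta>Y} \<le> aY" for k
    using assms(11) PF1 unfolding aY_def by simp
  have smU: "measure M {\<omega>\<in>space M. PF (3,k) \<omega> \<le> \<delta>U} \<le> aU" for k
    using assms(12) PF3 unfolding aU_def by simp
  have nnE: "AE \<omega> in M. PF (0,k) \<omega> \<ge> 0" for k using aE[of k] by eventually_elim (unfold PF0, simp)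
  have nnY: "AE \<omega> in M. PF (1,k) \<omega> \<ge> 0" for k using aY[of k] by eventually_elim (unfold PF1, simp)
  have nnG: "AE \<omega> in M. PF (2,k) \<omega> \<ge> 0" for k using aG[of k] by eventually_elim (unfold PF2, simp)
  have nnU: "AE \<omega> in M. PF (3,k) \<omega> \<ge> 0" for k using aU[of k] by eventually_elim (unfold PF3, simp)
  have dE: "AE \<omega> in M. \<forall>K::real. \<exists>n. (\<Sum>k\<le>n. PF (0,k) \<omega>) > K"
    by (rule sum_div_AE[OF ind _ nnE smE]) (use \<beta> in auto)
  have dY: "AE \<omega> in M. \<forall>K::real. \<exists>n. (\<Sum>k\<le>n. PF (1,k) \<omega>) > K"
    by (rule sum_div_AE[OF ind _ nnY smY \<delta>Y(1) aY1]) auto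
  have dG: "AE \<omega> in M. \<forall>K::real. \<exists>n. (\<Sum>k\<le>n. PF (2,k) \<omega>) > K"
    by (rule sum_div_AE[OF ind _ nnG smG]) auto
  define good where "good \<omega> \<longleftrightarrow> (\<forall>k. E k \<omega> \<ge> 0) \<and> (\<forall>k. Y k \<omega> \<ge> 0) \<and> (\<forall>k. G k \<omega> > 0)
      \<and> (\<forall>k. U k \<omega> \<ge> 0) \<and> (\<forall>K. \<exists>n. arr E n \<omega> > K) \<and> (\<forall>K. \<exists>n. (\<Sum>k\<le>n. Y k \<omega>) > K)
      \<and> (\<forall>K. \<exists>n. arr G n \<omega> > K)" for \<omega>
  have aE': "AE \<omega> in M. \<forall>k. E k \<omega> > 0" by (rule AE_all_countable[THEN iffD2]) (rule allI, rule aE)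
  have aG': "AE \<omega> in M. \<forall>k. G k \<omega> > 0" by (rule AE_all_countable[THEN iffD2]) (rule allI, rule aG)
  have aY': "AE \<omega> in M. \<forall>k. Y k \<omega> > 0" by (rule AE_all_countable[THEN iffD2]) (rule allI, rule aY)
  have aU': "AE \<omega> in M. \<forall>k. U k \<omega> > 0" by (rule AE_all_countable[THEN iffD2]) (rule allI, rule aU)
  have AEgood: "AE \<omega> in M. good \<omega>"
    using aE' aG' aY' aU' dE dY dG
  proof eventually_elim
    case (elim \<omega>)
    have "arr E n \<omega> = (\<Sum>k\<le>n. PF (0,k) \<omega>)" for n unfolding arr_def PF0 ..
    moreover have "arr G n \<omega> = (\<Sum>k\<le>n. PF (2,k) \<omega>)" for n unfolding arr_def PF2 ..
    moreover have "(\<Sum>k\<le>n. Y k \<omega>) = (\<Sum>k\<le>n. PF (1,k) \<omega>)" for n unfolding PF1 ..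
    ultimately show ?case using elim unfolding good_def by (auto simp: less_imp_le)
  qed
  obtain N0 where N0: "{\<omega>\<in>space M. \<not> good \<omega>} \<subseteq> N0" "emeasure M N0 = 0" "N0 \<in> sets M"
    using AEgood by (rule AE_E)
  define N where "N = N0"
  have N: "N \<in> null_sets M" "{\<omega>\<in>space M. \<not> good \<omega>} \<subseteq> N" using N0 unfolding N_def by (auto intro: null_setsI)
  define A where "A = space M - N"
  have Am: "A \<in> sets M" unfolding A_def using N by auto
  have Nsp: "N \<subseteq> space M" using N(1) by (auto dest: sets.sets_into_space)
  have Anull: "space M - A \<in> null_sets M" unfolding A_def using N Nsp by (simp add: Diff_Diff_Int Int_absorb1)
  have Agood: "good \<omega>" if "\<omega> \<in> A" for \<omega> using that N(2) unfolding A_def by blast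
  have Aprob: "emeasure M A = 1"
  proof -
    have "emeasure M A = emeasure M (space M) - emeasure M N"
      unfolding A_def using N Nsp by (subst emeasure_Diff) auto
    moreover have "emeasure M N = 0" using N(1) by auto
    ultimately show ?thesis by (simp add: emeasure_space_1)
  qed
  have loc: "pthG llow d l0 E Y \<omega> G" if "good \<omega>" "l0 \<ge> llow" for \<omega> l0
    using that d llow unfolding good_def by (intro good_loc) auto
  have Unn: "\<forall>k. U k \<omega> \<ge> 0" if "good \<omega>" for \<omega> using that unfolding good_def by blast
  have LB: "ennreal x \<le> Vfun M q llow d E Y G U p x l0" if l0: "l0 \<ge> llow" for l0
  proof -
    define X where "X = surplus llow d E Y G U p x l0"
    define Lx where "Lx = (\<lambda>(t::real) \<omega>. if \<omega> \<in> A then x else 0)"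
    have Lm: "Lminus Lx t \<omega> = (if t \<le> 0 then 0 else (if \<omega> \<in> A then x else 0))" for t \<omega>
      unfolding Lx_def by (rule Lminus_const)
    have early: "\<exists>\<eta>>0. \<forall>t. t < \<eta> \<longrightarrow> X t \<omega> = x + p * t" if "\<omega> \<in> A" for \<omega>
      unfolding X_def using pthG.XX_early[where U=U and p=p and x=x, OF loc[OF Agood[OF that] l0] Unn[OF Agood[OF that]]] .
    have rpos: "ereal 0 < ruin_time X Lx \<omega>" if wA: "\<omega> \<in> A" for \<omega>
    proof -
      obtain \<eta> where \<eta>: "\<eta> > 0" "\<forall>t. t < \<eta> \<longrightarrow> X t \<omega> = x + p * t" using early[OF wA] by blast
      have "ereal \<eta> \<le> ruin_time X Lx \<omega>"
      proof (rule ruin_lower)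
        fix t assume t: "0 \<le> t" "t < \<eta>"
        then show "X t \<omega> - Lminus Lx t \<omega> \<ge> 0" using \<eta> Lm[of t \<omega>] wA p x by auto
      qed
      moreover have "ereal 0 < ereal \<eta>" using \<eta>(1) by simp
      ultimately show ?thesis by (rule order.strict_trans2[rotated])
    qed
    have adm: "admissible M (\<lambda>t. completed M (nat_filt M llow d E Y G U l0 t)) X Lx"
      unfolding admissible_def
    proof (intro conjI ballI allI impI)
      fix \<omega> assume \<omega>: "\<omega> \<in> space M"
      fix s t :: real assume "0 \<le> s" "s \<le> t"
      then show "Lx s \<omega> \<le> Lx t \<omega>" unfolding Lx_def by simp
    next
      fix \<omega> and t :: real assume "\<omega> \<in> space M" "0 \<le> t"
      then show "continuous (at_right t) (\<lambda>s. Lx s \<omega>)" unfolding Lx_def by simp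
    next
      fix \<omega> assume "\<omega> \<in> space M"
      then show "0 \<le> Lx 0 \<omega>" unfolding Lx_def using x by simp
    next
      fix \<omega> t assume \<omega>: "\<omega> \<in> space M" and t: "0 \<le> t" "ereal t < ruin_time X Lx \<omega>"
      have ok: "X t \<omega> - Lminus Lx t \<omega> \<ge> 0" by (rule ruin_ok[OF t])
      show "Lx t \<omega> \<le> X t \<omega>"
      proof (cases "\<omega> \<in> A")
        case False then show ?thesis using ok Lm[of t \<omega>] unfolding Lx_def by (auto split: if_splits)
      next
        case True
        show ?thesis
        proof (cases "t \<le> 0")
          case True
          then have "t = 0" using t by simp
          obtain \<eta> where \<eta>: "\<eta> > 0" "\<forall>t. t < \<eta> \<longrightarrow> X t \<omega> = x + p * t" using early[OF \<open>\<omega> \<in> A\<close>] by blast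
          then have "X 0 \<omega> = x" by simp
          then show ?thesis using \<open>t = 0\<close> \<open>\<omega> \<in> A\<close> unfolding Lx_def by simp
        next
          case False
          then show ?thesis using ok Lm[of t \<omega>] \<open>\<omega> \<in> A\<close> unfolding Lx_def by simp
        qed
      qed
    next
      fix t :: real and B :: "real set" assume t: "0 \<le> t" and B: "B \<in> sets borel"
      have Asp: "A \<subseteq> space M" using Am by (rule sets.sets_into_space)
      let ?S = "{\<omega>\<in>space M. Lx t \<omega> \<in> B}"
      have "?S = space M \<or> ?S = {} \<or> ?S = A \<or> ?S = space M - A"
        unfolding Lx_def using Asp by (cases "x \<in> B"; cases "0 \<in> B") auto
      then show "?S \<in> completed M (nat_filt M llow d E Y G U l0 t)"
        unfolding nat_filt_def by (rule completed_in[OF Am Anull])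
    qed
    have "ennreal x = (\<integral>\<^sup>+\<omega>. ennreal x * indicator A \<omega> \<partial>M)"
      using Am Aprob by (simp add: nn_integral_cmult_indicator)
    also have "\<dots> \<le> Jval M q X Lx" unfolding Jval_def
    proof (rule nn_integral_mono)
      fix \<omega> assume "\<omega> \<in> space M"
      show "ennreal x * indicator A \<omega> \<le> disc_div q Lx (ruin_time X Lx \<omega>) \<omega>"
      proof (cases "\<omega> \<in> A")
        case True
        have "ennreal x \<le> disc_div q Lx (ruin_time X Lx \<omega>) \<omega>"
          by (rule disc_lower[OF x rpos[OF True]]) (simp add: Lx_def True)
        then show ?thesis using True by simp
      qed simp
    qed
    also have "\<dots> \<le> Vfun M q llow d E Y G U p x l0"
      unfolding Vfun_def X_def[symmetric] using adm by (intro SUP_upper) simp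
    finally show ?thesis .
  qed
  define D where "D = 2 * (x + p * (2/q))"
  have D0: "D \<ge> 0" unfolding D_def using x p q by simp
  define B1 where "B1 \<epsilon> n = {\<omega>\<in>space M. (\<Sum>j\<le>n. U j \<omega>) \<le> x + p * \<epsilon>}" for \<epsilon> n
  define B2 where "B2 l0 \<epsilon> n = {\<omega>\<in>space M. arr G n \<omega> > \<epsilon> * (exp (- d * \<epsilon>) * (l0 - llow))}" for l0 \<epsilon> n
  have B1m: "B1 \<epsilon> n \<in> sets M" for \<epsilon> n unfolding B1_def using rvU by measurable
  have B2m: "B2 l0 \<epsilon> n \<in> sets M" for l0 \<epsilon> n unfolding B2_def arr_def using rvG by measurable
  have UB: "Vfun M q llow d E Y G U p x l0 \<le> ennreal (x + p * \<epsilon>)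
      + ennreal D * (emeasure M (B1 \<epsilon> n) + emeasure M (B2 l0 \<epsilon> n))"
    if l0: "l0 \<ge> llow" and \<epsilon>: "\<epsilon> > 0" for l0 \<epsilon> n
  proof -
    define X where "X = surplus llow d E Y G U p x l0"
    show ?thesis unfolding Vfun_def X_def[symmetric]
    proof (rule SUP_least)
      fix L assume "L \<in> {L. admissible M (\<lambda>t. completed M (nat_filt M llow d E Y G U l0 t)) X L}"
      then have adm: "admissible M (\<lambda>t. completed M (nat_filt M llow d E Y G U l0 t)) X L" by simp
      have pw: "disc_div q L (ruin_time X L \<omega>) \<omega> \<le> ennreal (x + p * \<epsilon>)
          + ennreal D * (indicator (B1 \<epsilon> n) \<omega> + indicator (B2 l0 \<epsilon> n) \<omega>)"
        if \<omega>: "\<omega> \<in> space M" "good \<omega>" for \<omega>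
      proof -
        have lc: "pthG llow d l0 E Y \<omega> G" by (rule loc[OF \<omega>(2) l0])
        have un: "\<forall>k. U k \<omega> \<ge> 0" by (rule Unn[OF \<omega>(2)])
        from adm \<omega>(1) have mono: "\<forall>s t. 0 \<le> s \<longrightarrow> s \<le> t \<longrightarrow> L s \<omega> \<le> L t \<omega>"
          and rc: "\<forall>t\<ge>0. continuous (at_right t) (\<lambda>s. L s \<omega>)" and L0: "0 \<le> L 0 \<omega>"
          and LX: "\<forall>t\<ge>0. ereal t < ruin_time X L \<omega> \<longrightarrow> L t \<omega> \<le> X t \<omega>"
          unfolding admissible_def by auto
        have Xle: "X t \<omega> \<le> x + p * t" for t
          unfolding X_def by (rule pthG.XX_le[where U=U and p=p and x=x, OF lc un])
        have db: "disc_div q L (ruin_time X L \<omega>) \<omega> \<le> ennreal (x + p * \<epsilon>)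
            + (if ereal \<epsilon> < ruin_time X L \<omega> then ennreal D else 0)"
          unfolding D_def
        proof (rule disc_bound[where L=L and \<omega>=\<omega> and x=x and p=p and q=q and \<epsilon>=\<epsilon> and \<tau>="ruin_time X L \<omega>", OF mono rc L0 _ x _ q \<epsilon>])
          fix t assume t: "0 \<le> t" "ereal t < ruin_time X L \<omega>"
          then have "L t \<omega> \<le> X t \<omega>" using LX by simp
          then show "L t \<omega> \<le> x + p * t" using Xle[of t] by linarith
        qed (use p in simp)
        have "(if ereal \<epsilon> < ruin_time X L \<omega> then ennreal D else 0)
            \<le> ennreal D * (indicator (B1 \<epsilon> n) \<omega> + indicator (B2 l0 \<epsilon> n) \<omega>)"
        proof (cases "ereal \<epsilon> < ruin_time X L \<omega>")
          case True
          have "L \<epsilon> \<omega> \<le> X \<epsilon> \<omega>" using LX True \<epsilon> by simp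
          moreover have "L 0 \<omega> \<le> L \<epsilon> \<omega>" using mono \<epsilon> by simp
          ultimately have Xnn: "X \<epsilon> \<omega> \<ge> 0" using L0 by linarith
          have "\<omega> \<in> B1 \<epsilon> n \<or> \<omega> \<in> B2 l0 \<epsilon> n"
          proof (cases "arr G n \<omega> \<le> \<epsilon> * (exp (- d * \<epsilon>) * (l0 - llow))")
            case True
            have "\<epsilon> * (exp (- d * \<epsilon>) * (l0 - llow)) \<le> Lam llow d E Y l0 \<epsilon> \<omega>"
              by (rule pth.LL_lower[OF pthG.axioms(1)[OF lc]]) (use \<epsilon> in simp)
            then have ar: "arr G n \<omega> \<le> Lam llow d E Y l0 \<epsilon> \<omega>" using True by linarith
            have "(\<Sum>j\<le>n. U j \<omega>) \<le> x + p * \<epsilon>"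
              by (rule pthG.XX_claims[where U=U and p=p and x=x, OF lc un _ ar])
                 (use \<epsilon> Xnn in \<open>simp_all add: X_def\<close>)
            then show ?thesis unfolding B1_def using \<omega>(1) by simp
          next
            case False then show ?thesis unfolding B2_def using \<omega>(1) by simp
          qed
          then have "1 \<le> indicator (B1 \<epsilon> n) \<omega> + (indicator (B2 l0 \<epsilon> n) \<omega> :: ennreal)"
            by (auto simp: indicator_def)
          then have "ennreal D * 1 \<le> ennreal D * (indicator (B1 \<epsilon> n) \<omega> + indicator (B2 l0 \<epsilon> n) \<omega>)"
            by (rule mult_left_mono) simp
          then show ?thesis using True by simp
        qed simp
        then show ?thesis using db by (meson add_left_mono order_trans)
      qed
      have "Jval M q X L = (\<integral>\<^sup>+\<omega>. disc_div q L (ruin_time X L \<omega>) \<omega> \<partial>M)" unfolding Jval_def ..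
      also have "\<dots> \<le> (\<integral>\<^sup>+\<omega>. ennreal (x + p * \<epsilon>)
          + ennreal D * (indicator (B1 \<epsilon> n) \<omega> + indicator (B2 l0 \<epsilon> n) \<omega>) \<partial>M)"
      proof (rule nn_integral_mono_AE)
        show "AE \<omega> in M. disc_div q L (ruin_time X L \<omega>) \<omega> \<le> ennreal (x + p * \<epsilon>)
          + ennreal D * (indicator (B1 \<epsilon> n) \<omega> + indicator (B2 l0 \<epsilon> n) \<omega>)"
          using AEgood AE_space
        proof eventually_elim
          case (elim \<omega>) then show ?case by (intro pw) auto
        qed
      qed
      also have "\<dots> = ennreal (x + p * \<epsilon>) + ennreal D * (emeasure M (B1 \<epsilon> n) + emeasure M (B2 l0 \<epsilon> n))"
      proof -
        have m1: "(\<lambda>\<omega>. indicator (B1 \<epsilon> n) \<omega> + (indicator (B2 l0 \<epsilon> n) \<omega> :: ennreal)) \<in> borel_measurable M"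
          using B1m B2m by measurable
        have "(\<integral>\<^sup>+\<omega>. ennreal (x + p * \<epsilon>) + ennreal D * (indicator (B1 \<epsilon> n) \<omega> + indicator (B2 l0 \<epsilon> n) \<omega>) \<partial>M)
            = (\<integral>\<^sup>+\<omega>. ennreal (x + p * \<epsilon>) \<partial>M)
              + (\<integral>\<^sup>+\<omega>. ennreal D * (indicator (B1 \<epsilon> n) \<omega> + indicator (B2 l0 \<epsilon> n) \<omega>) \<partial>M)"
          by (rule nn_integral_add) (use m1 in auto)
        also have "(\<integral>\<^sup>+\<omega>. ennreal D * (indicator (B1 \<epsilon> n) \<omega> + indicator (B2 l0 \<epsilon> n) \<omega>) \<partial>M)
            = ennreal D * (\<integral>\<^sup>+\<omega>. indicator (B1 \<epsilon> n) \<omega> + indicator (B2 l0 \<epsilon> n) \<omega> \<partial>M)"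
          by (rule nn_integral_cmult[OF m1])
        also have "(\<integral>\<^sup>+\<omega>. indicator (B1 \<epsilon> n) \<omega> + indicator (B2 l0 \<epsilon> n) \<omega> \<partial>M)
            = (\<integral>\<^sup>+\<omega>. indicator (B1 \<epsilon> n) \<omega> \<partial>M) + (\<integral>\<^sup>+\<omega>. indicator (B2 l0 \<epsilon> n) \<omega> \<partial>M)"
          by (rule nn_integral_add) (use B1m B2m in auto)
        also have "(\<integral>\<^sup>+\<omega>. indicator (B1 \<epsilon> n) \<omega> \<partial>M) = emeasure M (B1 \<epsilon> n)" using B1m by simp
        also have "(\<integral>\<^sup>+\<omega>. indicator (B2 l0 \<epsilon> n) \<omega> \<partial>M) = emeasure M (B2 l0 \<epsilon> n)" using B2m by simp
        also have "(\<integral>\<^sup>+\<omega>. ennreal (x + p * \<epsilon>) \<partial>M) = ennreal (x + p * \<epsilon>)"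
          by (simp add: emeasure_space_1)
        finally show ?thesis .
      qed
      finally show "Jval M q X L \<le> ennreal (x + p * \<epsilon>) + ennreal D * (emeasure M (B1 \<epsilon> n) + emeasure M (B2 l0 \<epsilon> n))" .
    qed
  qed
  define \<rho> where "\<rho> = exp (-\<delta>U) + (1 - exp (-\<delta>U)) * aU"
  have aU0: "aU \<ge> 0" using smU[of 0] measure_nonneg order_trans by blast
  have eU: "exp (-\<delta>U) < 1" using \<delta>U(1) by simp
  have \<rho>0: "\<rho> \<ge> 0" unfolding \<rho>_def using aU0 eU by (simp add: add_nonneg_nonneg)
  have \<rho>1: "\<rho> < 1"
  proof -
    have "(1 - exp (-\<delta>U)) * aU < (1 - exp (-\<delta>U)) * 1" using eU aU1 by (intro mult_strict_left_mono) auto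
    then show ?thesis unfolding \<rho>_def by simp
  qed
  have main: "eventually (\<lambda>l0. Vfun M q llow d E Y G U p x l0 \<le> ennreal (x + e)) at_top"
    if e: "e > 0" for e
  proof -
    define \<epsilon> where "\<epsilon> = e / (4 * p)"
    have \<epsilon>: "\<epsilon> > 0" unfolding \<epsilon>_def using e p by simp
    have p\<epsilon>: "p * \<epsilon> = e / 4" unfolding \<epsilon>_def using p by simp
    have lim1: "(\<lambda>n. D * exp (x + p * \<epsilon>) * \<rho> ^ Suc n) \<longlonglongrightarrow> 0"
    proof -
      have "(\<lambda>n. \<rho> ^ n) \<longlonglongrightarrow> 0" using \<rho>0 \<rho>1 by (intro LIMSEQ_power_zero) auto
      then have "(\<lambda>n. \<rho> ^ Suc n) \<longlonglongrightarrow> 0" by (rule LIMSEQ_Suc)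
      then show ?thesis by (rule tendsto_mult_right_zero)
    qed
    have "eventually (\<lambda>n. D * exp (x + p * \<epsilon>) * \<rho> ^ Suc n < e / 4) sequentially"
      by (rule order_tendstoD(2)[OF lim1]) (use e in simp)
    then obtain n where n: "D * exp (x + p * \<epsilon>) * \<rho> ^ Suc n < e / 4"
      by (meson eventually_sequentially order_refl)
    have mB1: "measure M (B1 \<epsilon> n) \<le> exp (x + p * \<epsilon>) * \<rho> ^ Suc n"
    proof -
      have "measure M {\<omega>\<in>space M. (\<Sum>k\<le>n. PF (3,k) \<omega>) \<le> x + p * \<epsilon>}
          \<le> exp (x + p * \<epsilon>) * (exp (-\<delta>U) + (1 - exp (-\<delta>U)) * aU) ^ Suc n"
        by (rule sum_tail[OF ind _ nnU smU \<delta>U(1)]) simp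
      then show ?thesis unfolding B1_def \<rho>_def by (simp only: PF3)
    qed
    define C where "C m = {\<omega>\<in>space M. arr G n \<omega> > real m}" for m :: nat
    have Cm: "range C \<subseteq> sets M" unfolding C_def arr_def using rvG by auto
    have Cd: "decseq C" unfolding C_def by (intro decseq_SucI) auto
    have "(\<Inter>m. C m) = {}"
    proof (intro equalityI subsetI)
      fix \<omega> assume w: "\<omega> \<in> (\<Inter>m. C m)"
      obtain m :: nat where "arr G n \<omega> < real m" using reals_Archimedean2 by blast
      moreover have "\<omega> \<in> C m" using w by blast
      ultimately show "\<omega> \<in> {}" unfolding C_def by simp
    qed simp
    then have "(\<lambda>m. measure M (C m)) \<longlonglongrightarrow> 0" using finite_Lim_measure_decseq[OF Cm Cd] by simp
    then have "(\<lambda>m. D * measure M (C m)) \<longlonglongrightarrow> 0" by (rule tendsto_mult_right_zero)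
    then have "eventually (\<lambda>m. D * measure M (C m) < e / 4) sequentially"
      by (rule order_tendstoD(2)) (use e in simp)
    then obtain m where m: "D * measure M (C m) < e / 4"
      by (meson eventually_sequentially order_refl)
    define c where "c = \<epsilon> * exp (- d * \<epsilon>)"
    have c: "c > 0" unfolding c_def using \<epsilon> by simp
    show ?thesis using eventually_ge_at_top[of "llow + real m / c"]
    proof eventually_elim
      case (elim l0)
      have l0: "l0 \<ge> llow" using elim c by (smt (verit) divide_nonneg_pos of_nat_0_le_iff)
      have "real m / c \<le> l0 - llow" using elim by simp
      then have "real m \<le> c * (l0 - llow)" using c by (simp add: field_simps)
      then have "real m \<le> \<epsilon> * (exp (- d * \<epsilon>) * (l0 - llow))" unfolding c_def by (simp add: mult.assoc)
      then have "B2 l0 \<epsilon> n \<subseteq> C m" unfolding B2_def C_def by auto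
      then have mB2: "measure M (B2 l0 \<epsilon> n) \<le> measure M (C m)"
        using Cm by (intro finite_measure_mono) auto
      have m1: "0 \<le> measure M (B1 \<epsilon> n)" "0 \<le> measure M (B2 l0 \<epsilon> n)" by auto
      have "Vfun M q llow d E Y G U p x l0 \<le> ennreal (x + p * \<epsilon>)
          + ennreal D * (emeasure M (B1 \<epsilon> n) + emeasure M (B2 l0 \<epsilon> n))"
        by (rule UB[OF l0 \<epsilon>])
      also have "\<dots> = ennreal (x + p * \<epsilon> + D * (measure M (B1 \<epsilon> n) + measure M (B2 l0 \<epsilon> n)))"
      proof -
        have s1: "emeasure M (B1 \<epsilon> n) + emeasure M (B2 l0 \<epsilon> n)
            = ennreal (measure M (B1 \<epsilon> n) + measure M (B2 l0 \<epsilon> n))"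
          unfolding emeasure_eq_measure by (rule ennreal_plus[symmetric, OF m1])
        have s2: "ennreal D * ennreal (measure M (B1 \<epsilon> n) + measure M (B2 l0 \<epsilon> n))
            = ennreal (D * (measure M (B1 \<epsilon> n) + measure M (B2 l0 \<epsilon> n)))"
          by (rule ennreal_mult[symmetric]) (use D0 m1 in auto)
        have s3: "ennreal (x + p * \<epsilon>) + ennreal (D * (measure M (B1 \<epsilon> n) + measure M (B2 l0 \<epsilon> n)))
            = ennreal (x + p * \<epsilon> + D * (measure M (B1 \<epsilon> n) + measure M (B2 l0 \<epsilon> n)))"
          by (rule ennreal_plus[symmetric]) (use D0 m1 x p \<epsilon> in auto)
        show ?thesis unfolding s1 s2 s3 ..
      qed
      also have "\<dots> \<le> ennreal (x + e)"
      proof (rule ennreal_leI)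
        have "D * measure M (B1 \<epsilon> n) \<le> D * (exp (x + p * \<epsilon>) * \<rho> ^ Suc n)"
          using mB1 D0 by (intro mult_left_mono) auto
        moreover have "D * measure M (B2 l0 \<epsilon> n) \<le> D * measure M (C m)"
          using mB2 D0 by (intro mult_left_mono) auto
        ultimately show "x + p * \<epsilon> + D * (measure M (B1 \<epsilon> n) + measure M (B2 l0 \<epsilon> n)) \<le> x + e"
          using n m p\<epsilon> e by (simp add: algebra_simps)
      qed
      finally show ?case .
    qed
  qed
  show ?thesis
  proof (rule order_tendstoI)
    fix a assume a: "a < ennreal x"
    show "eventually (\<lambda>l0. a < Vfun M q llow d E Y G U p x l0) at_top"
      using eventually_ge_at_top[of llow]
    proof eventually_elim
      case (elim l0) then show ?case using LB[of l0] a by (meson order.strict_trans2)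
    qed
  next
    fix a assume a: "ennreal x < a"
    obtain e where e: "e > 0" "ennreal (x + e) < a"
    proof (cases a rule: ennreal_cases)
      case (real r)
      then have xr: "x < r" using a x by (simp add: ennreal_less_iff)
      show thesis
      proof (rule that[of "(r - x) / 2"])
        show "(r - x) / 2 > 0" using xr by simp
        have "ennreal (x + (r - x) / 2) < ennreal r" using xr x by (intro ennreal_lessI) (auto simp: field_simps)
        then show "ennreal (x + (r - x) / 2) < a" using real by simp
      qed
    next
      case top then show thesis by (intro that[of 1]) auto
    qed
    show "eventually (\<lambda>l0. Vfun M q llow d E Y G U p x l0 < a) at_top"
      using main[OF e(1)]
    proof eventually_elim
      case (elim l0) then show ?case using e(2) by (meson order.strict_trans1)
    qed
  qed
qed

end
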